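(* Let $O$ be an operator on $\mathcal{H}=(\mathbb{C}^2)^{\otimes n}$ with spectral norm $\|O\|$, and let $\lambda$ be such that $\langle \mathbb{1}\rangle(\lambda)>0$. Let $\varepsilon>0$ and $\kappa>0$. Suppose both estimators $\hat{\langle O\rangle}$ and $\hat{\langle \mathbb{1}\rangle}$ are computed with sample size $M$ satisfying $$M\ge \frac{\chi^2}{\kappa\,\varepsilon^2\,\langle \mathbb{1}\rangle(\lambda)^2},\qquad \chi=\sqrt{\|O\|^2+\sigma_O^2}+\sqrt{1+\sigma_{\mathbb{1}}^2}\,\|O\|+\varepsilon\sqrt{1+\sigma_{\mathbb{1}}^2}.$$ Then $$\Pr\left(\left|\frac{\hat{\langle O\rangle}}{\hat{\langle \mathbb{1}\rangle}}-\widetilde{\langle O\rangle}(\lambda)\right|\le\varepsilon\right)\ge 1-2\kappa .$$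
   Context: Setting (variational quantum-circuit Monte Carlo). Fix $n$ qubits with Hilbert space $\mathcal{H}=(\mathbb{C}^2)^{\otimes n}$. A parameterised circuit gives normalised states $|\phi(\theta)\rangle=U(\theta)|0\rangle^{\otimes n}$, $\theta\in\Theta\subseteq\mathbb{R}^K$, with $U(\theta)$ unitary. A complex-valued guiding function $\alpha(\theta;\lambda)$ depends on parameters $\lambda$; let $C(\lambda)=\int_\Theta|\alpha(\theta;\lambda)|\,d\theta$ (finite and positive), $P(\theta;\lambda)=|\alpha(\theta;\lambda)|/C(\lambda)$ (a probability density), and $e^{i\gamma(\theta;\lambda)}=\alpha(\theta;\lambda)/|\alpha(\theta;\lambda)|$. The (unnormalised) variational state is $|\psi(\lambda)\rangle=\int_\Theta P(\theta;\lambda)e^{i\gamma(\theta;\lambda)}|\phi(\theta)\rangle\,d\theta$. For an operator $O$, $\langle O\rangle(\lambda)=\langle\psi(\lambda)|O|\psi(\lambda)\rangle$ and $\widetilde{\langle O\rangle}(\lambda)=\langle O\rangle(\lambda)/\langle \mathbb{1}\rangle(\lambda)$, where $\mathbb{1}$ is the identity. Estimator: for $\theta,\theta'\in\Theta$ let $X_{\theta,\theta'}=e^{i[\gamma(\theta;\lambda)-\gamma(\theta';\lambda)]}\langle\phi(\theta')|O|\phi(\theta)\rangle$. It is assumed that for each pair $(\theta,\theta')$ a (quantum measurement) procedure outputs a random variable $\hat X_{\theta,\theta'}$ that is an unbiased estimator of $X_{\theta,\theta'}$ with variance $\mathbb{E}|\hat X_{\theta,\theta'}-X_{\theta,\theta'}|^2\le\sigma_O^2$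 for all $\theta,\theta'$. The estimator $\hat{\langle O\rangle}$ with sample size $M$ draws $M$ independent pairs $(\theta_l,\theta_l')$ from the density $P(\theta;\lambda)P(\theta';\lambda)$, obtains independent $\hat X_{\theta_l,\theta_l'}$, and outputs their average $\frac1M\sum_{l=1}^M\hat X_{\theta_l,\theta'_l}$. The estimator $\hat{\langle \mathbb{1}\rangle}$ is the same construction for $O=\mathbb{1}$, with per-pair variance bound $\sigma_{\mathbb{1}}^2$. *)

theory Defs
  imports "HOL-Probability.Probability"
begin

text \<open>The n-qubit Hilbert space (C^2)^(tensor n) is identified with C^d, d = 2^n,
  via the computational basis. Vectors are functions nat => complex (only indices below d
  matter), operators are matrices nat => nat => complex (only indices below d matter).\<close>

definition qdim :: "nat \<Rightarrow> nat" where
  "qdim n = 2 ^ n"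

definition cinner :: "nat \<Rightarrow> (nat \<Rightarrow> complex) \<Rightarrow> (nat \<Rightarrow> complex) \<Rightarrow> complex" where
  "cinner d u v = (\<Sum>i<d. cnj (u i) * v i)"

definition mat_app :: "nat \<Rightarrow> (nat \<Rightarrow> nat \<Rightarrow> complex) \<Rightarrow> (nat \<Rightarrow> complex) \<Rightarrow> (nat \<Rightarrow> complex)" where
  "mat_app d A v = (\<lambda>i. \<Sum>j<d. A i j * v j)"

definition vnorm :: "nat \<Rightarrow> (nat \<Rightarrow> complex) \<Rightarrow> real" where
  "vnorm d v = sqrt (\<Sum>i<d. (cmod (v i))\<^sup>2)"

definition spec_norm :: "nat \<Rightarrow> (nat \<Rightarrow> nat \<Rightarrow> complex) \<Rightarrow> real" where
  "spec_norm d A = (SUP v \<in> {v. vnorm d v = 1}. vnorm d (mat_app d A v))"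

definition unitary_mat :: "nat \<Rightarrow> (nat \<Rightarrow> nat \<Rightarrow> complex) \<Rightarrow> bool" where
  "unitary_mat d U \<longleftrightarrow>
     (\<forall>i<d. \<forall>j<d. (\<Sum>k<d. cnj (U k i) * U k j) = (if i = j then 1 else 0)) \<and>
     (\<forall>i<d. \<forall>j<d. (\<Sum>k<d. U i k * cnj (U j k)) = (if i = j then 1 else 0))"

definition id_op :: "nat \<Rightarrow> nat \<Rightarrow> complex" where
  "id_op i j = (if i = j then 1 else 0)"

text \<open>|0>^(tensor n) is the first computational basis vector.\<close>
definition ket0 :: "nat \<Rightarrow> complex" where
  "ket0 i = (if i = 0 then 1 else 0)"

definition circ_state :: "nat \<Rightarrow> ('t \<Rightarrow> nat \<Rightarrow> nat \<Rightarrow> complex) \<Rightarrow> 't \<Rightarrow> (nat \<Rightarrow> complex)" where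
  "circ_state n U \<theta> = mat_app (qdim n) (U \<theta>) ket0"

definition Cnorm :: "(real^'k) set \<Rightarrow> ('p \<Rightarrow> real^'k \<Rightarrow> complex) \<Rightarrow> 'p \<Rightarrow> real" where
  "Cnorm \<Theta> \<alpha> lam = (\<integral>\<theta>\<in>\<Theta>. cmod (\<alpha> lam \<theta>) \<partial>lborel)"

definition Pdens :: "(real^'k) set \<Rightarrow> ('p \<Rightarrow> real^'k \<Rightarrow> complex) \<Rightarrow> 'p \<Rightarrow> real^'k \<Rightarrow> real" where
  "Pdens \<Theta> \<alpha> lam \<theta> = cmod (\<alpha> lam \<theta>) / Cnorm \<Theta> \<alpha> lam"

definition phase :: "('p \<Rightarrow> real^'k \<Rightarrow> complex) \<Rightarrow> 'p \<Rightarrow> real^'k \<Rightarrow> complex" where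
  "phase \<alpha> lam \<theta> = \<alpha> lam \<theta> / complex_of_real (cmod (\<alpha> lam \<theta>))"

definition Pmeas :: "(real^'k) set \<Rightarrow> ('p \<Rightarrow> real^'k \<Rightarrow> complex) \<Rightarrow> 'p \<Rightarrow> (real^'k) measure" where
  "Pmeas \<Theta> \<alpha> lam = density lborel (\<lambda>\<theta>. ennreal (indicator \<Theta> \<theta> * Pdens \<Theta> \<alpha> lam \<theta>))"

definition psi :: "nat \<Rightarrow> (real^'k) set \<Rightarrow> ('p \<Rightarrow> real^'k \<Rightarrow> complex)
                   \<Rightarrow> (real^'k \<Rightarrow> nat \<Rightarrow> nat \<Rightarrow> complex) \<Rightarrow> 'p \<Rightarrow> nat \<Rightarrow> complex" where
  "psi n \<Theta> \<alpha> U lam = (\<lambda>i. \<integral>\<theta>\<in>\<Theta>. complex_of_real (Pdens \<Theta> \<alpha> lam \<theta>) * phase \<alpha> lam \<theta>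
                                       * circ_state n U \<theta> i \<partial>lborel)"

definition expval :: "nat \<Rightarrow> (real^'k) set \<Rightarrow> ('p \<Rightarrow> real^'k \<Rightarrow> complex)
                   \<Rightarrow> (real^'k \<Rightarrow> nat \<Rightarrow> nat \<Rightarrow> complex) \<Rightarrow> 'p \<Rightarrow> (nat \<Rightarrow> nat \<Rightarrow> complex) \<Rightarrow> complex" where
  "expval n \<Theta> \<alpha> U lam Op =
     cinner (qdim n) (psi n \<Theta> \<alpha> U lam) (mat_app (qdim n) Op (psi n \<Theta> \<alpha> U lam))"

definition Xval :: "nat \<Rightarrow> ('p \<Rightarrow> real^'k \<Rightarrow> complex) \<Rightarrow> (real^'k \<Rightarrow> nat \<Rightarrow> nat \<Rightarrow> complex)
                   \<Rightarrow> 'p \<Rightarrow> (nat \<Rightarrow> nat \<Rightarrow> complex) \<Rightarrow> (real^'k) \<times> (real^'k) \<Rightarrow> complex" where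
  "Xval n \<alpha> U lam Op t = phase \<alpha> lam (fst t) * cnj (phase \<alpha> lam (snd t)) *
     cinner (qdim n) (circ_state n U (snd t)) (mat_app (qdim n) Op (circ_state n U (fst t)))"

text \<open>A measurement procedure: a Markov kernel Q from pairs (theta,theta') to complex
  outcomes; for every pair in Theta x Theta its output is an unbiased estimator of X
  with mean-square error at most sigma^2.\<close>
definition meas_procedure ::
  "((real^'k) \<times> (real^'k)) measure \<Rightarrow> (real^'k) set \<Rightarrow> ((real^'k) \<times> (real^'k) \<Rightarrow> complex) \<Rightarrow> real
     \<Rightarrow> ((real^'k) \<times> (real^'k) \<Rightarrow> complex measure) \<Rightarrow> bool" where
  "meas_procedure PP \<Theta> X \<sigma> Q \<longleftrightarrow>
     Q \<in> measurable PP (subprob_algebra borel) \<and>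
     (\<forall>t \<in> \<Theta> \<times> \<Theta>. prob_space (Q t) \<and>
        has_bochner_integral (Q t) (\<lambda>z. z) (X t) \<and>
        (\<integral>\<^sup>+ z. ennreal ((cmod (z - X t))\<^sup>2) \<partial>Q t) \<le> ennreal (\<sigma>\<^sup>2))"

text \<open>The sampling scheme on a probability space Omega: the pairs (T l, Y l), l < M, are
  independent; T l is distributed as P x P and, given T l = t, the outcome Y l is
  distributed as Q t.\<close>
definition sampling_scheme ::
  "'w measure \<Rightarrow> nat \<Rightarrow> ((real^'k) \<times> (real^'k)) measure \<Rightarrow> ((real^'k) \<times> (real^'k) \<Rightarrow> complex measure)
     \<Rightarrow> (nat \<Rightarrow> 'w \<Rightarrow> (real^'k) \<times> (real^'k)) \<Rightarrow> (nat \<Rightarrow> 'w \<Rightarrow> complex) \<Rightarrow> bool" where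
  "sampling_scheme \<Omega> M PP Q T Y \<longleftrightarrow>
     prob_space.indep_vars \<Omega> (\<lambda>_. PP \<Otimes>\<^sub>M borel) (\<lambda>l \<omega>. (T l \<omega>, Y l \<omega>)) {..<M} \<and>
     (\<forall>l<M. distr \<Omega> (PP \<Otimes>\<^sub>M borel) (\<lambda>\<omega>. (T l \<omega>, Y l \<omega>)) =
              PP \<bind> (\<lambda>t. distr (Q t) (PP \<Otimes>\<^sub>M borel) (\<lambda>z. (t, z))))"

definition sample_mean :: "nat \<Rightarrow> (nat \<Rightarrow> 'w \<Rightarrow> complex) \<Rightarrow> 'w \<Rightarrow> complex" where
  "sample_mean M Y \<omega> = (\<Sum>l<M. Y l \<omega>) / of_nat M"

end

theory Submission
  imports Defs
begin

lemma vnorm_nonneg: "vnorm d v \<ge> 0"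
  unfolding vnorm_def by (simp add: sum_nonneg)

lemma cinner_CS: "cmod (cinner d u w) \<le> vnorm d u * vnorm d w"
proof -
  have "cmod (cinner d u w) \<le> (\<Sum>i<d. cmod (u i) * cmod (w i))"
    unfolding cinner_def by (rule order.trans[OF norm_sum]) (simp add: norm_mult)
  also have "\<dots> \<le> sqrt ((\<Sum>i<d. (cmod (u i))\<^sup>2) * (\<Sum>i<d. (cmod (w i))\<^sup>2))"
    by (rule real_le_rsqrt, rule Cauchy_Schwarz_ineq_sum)
  also have "\<dots> = vnorm d u * vnorm d w"
    unfolding vnorm_def by (simp add: real_sqrt_mult)
  finally show ?thesis .
qed

lemma vnorm_zero: "vnorm d v = 0 \<Longrightarrow> i < d \<Longrightarrow> v i = 0"
proof -
  assume a: "vnorm d v = 0" "i < d"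
  have "(\<Sum>i<d. (cmod (v i))\<^sup>2) = 0" using a(1) unfolding vnorm_def by simp
  then have "(cmod (v i))\<^sup>2 = 0" using a(2) by (subst (asm) sum_nonneg_eq_0_iff) auto
  then show ?thesis by simp
qed

lemma vnorm_scale: "vnorm d (\<lambda>i. c * v i) = cmod c * vnorm d v"
  unfolding vnorm_def
  by (simp add: norm_mult power_mult_distrib sum_distrib_left[symmetric] real_sqrt_mult)

lemma vnorm_cong: "(\<And>i. i < d \<Longrightarrow> u i = v i) \<Longrightarrow> vnorm d u = vnorm d v"
  unfolding vnorm_def by simp

lemma vnorm_ket0: "d > 0 \<Longrightarrow> vnorm d ket0 = 1"
proof -
  assume d: "d > 0"
  have "(\<Sum>i<d. (cmod (ket0 i))\<^sup>2) = (\<Sum>i\<in>{0}. (cmod (ket0 i))\<^sup>2)"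
    by (rule sum.mono_neutral_right) (use d in \<open>auto simp: ket0_def\<close>)
  then show ?thesis unfolding vnorm_def by (simp add: ket0_def)
qed

lemma mat_app_bound:
  assumes "vnorm d v = 1"
  shows "vnorm d (mat_app d A v) \<le> sqrt (\<Sum>i<d. (\<Sum>j<d. cmod (A i j))\<^sup>2)"
proof -
  have vj: "cmod (v j) \<le> 1" if "j < d" for j
  proof -
    have "(cmod (v j))\<^sup>2 \<le> (\<Sum>i<d. (cmod (v i))\<^sup>2)"
      by (rule member_le_sum) (use that in auto)
    also have "\<dots> = 1" using assms unfolding vnorm_def
      by (metis abs_of_nonneg real_sqrt_eq_1_iff sum_nonneg zero_le_power2 real_sqrt_abs real_sqrt_eq_iff)
    finally show ?thesis by (simp add: power_le_one_iff abs_le_square_iff)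
  qed
  have "cmod (mat_app d A v i) \<le> (\<Sum>j<d. cmod (A i j))" for i
    unfolding mat_app_def
    by (rule order.trans[OF norm_sum]) (auto intro!: sum_mono simp: norm_mult intro: mult_left_le[OF vj])
  then have "(cmod (mat_app d A v i))\<^sup>2 \<le> (\<Sum>j<d. cmod (A i j))\<^sup>2" for i
    by (simp add: power_mono)
  then show ?thesis unfolding vnorm_def
    by (intro real_sqrt_le_mono sum_mono) auto
qed

lemma spec_norm_bdd: "bdd_above ((\<lambda>v. vnorm d (mat_app d A v)) ` {v. vnorm d v = 1})"
  by (rule bdd_aboveI[where M="sqrt (\<Sum>i<d. (\<Sum>j<d. cmod (A i j))\<^sup>2)"]) (auto intro: mat_app_bound)

lemma spec_norm_upper: "vnorm d v = 1 \<Longrightarrow> vnorm d (mat_app d A v) \<le> spec_norm d A"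
  unfolding spec_norm_def by (rule cSUP_upper[OF _ spec_norm_bdd]) auto

lemma spec_norm_nonneg: "d > 0 \<Longrightarrow> spec_norm d A \<ge> 0"
  using spec_norm_upper[OF vnorm_ket0, of d A] vnorm_nonneg[of d] by (meson order.trans)

lemma mat_app_scale: "mat_app d A (\<lambda>i. c * v i) = (\<lambda>i. c * mat_app d A v i)"
  unfolding mat_app_def by (simp add: sum_distrib_left algebra_simps)

lemma spec_norm_bound: "vnorm d (mat_app d A v) \<le> spec_norm d A * vnorm d v"
proof (cases "vnorm d v = 0")
  case True
  then have "mat_app d A v i = 0" if "i < d" for i
    unfolding mat_app_def using vnorm_zero[OF True] by simp
  then have "vnorm d (mat_app d A v) = 0" unfolding vnorm_def by simp
  then show ?thesis using True by simp
next
  case False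
  define r where "r = vnorm d v"
  have r: "r > 0" using False vnorm_nonneg[of d v] unfolding r_def by simp
  define w where "w = (\<lambda>i. complex_of_real (1/r) * v i)"
  have "vnorm d w = 1" unfolding w_def vnorm_scale using r by (simp add: r_def norm_divide)
  then have "vnorm d (mat_app d A w) \<le> spec_norm d A" by (rule spec_norm_upper)
  moreover have "vnorm d (mat_app d A w) = vnorm d (mat_app d A v) / r"
    unfolding w_def mat_app_scale vnorm_scale using r by (simp add: norm_divide)
  ultimately show ?thesis using r unfolding r_def[symmetric] by (simp add: field_simps)
qed

lemma qdim_pos: "qdim n > 0" unfolding qdim_def by simp

lemma mat_app_id: "i < d \<Longrightarrow> mat_app d id_op v i = v i"
proof -
  assume i: "i < d"
  have "(\<Sum>j<d. (if i = j then 1 else 0) * v j) = (\<Sum>j<d. if i = j then v j else 0)"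
    by (rule sum.cong) auto
  also have "\<dots> = v i" using i by (simp add: sum.delta)
  finally show ?thesis unfolding mat_app_def id_op_def .
qed

lemma cinner_id: "cinner d u (mat_app d id_op v) = cinner d u v"
  unfolding cinner_def by (intro sum.cong refl) (simp add: mat_app_id)

lemma cinner_self: "cinner d v v = complex_of_real ((vnorm d v)\<^sup>2)"
proof -
  have "cinner d v v = (\<Sum>i<d. complex_of_real ((cmod (v i))\<^sup>2))"
    unfolding cinner_def by (intro sum.cong refl) (metis complex_norm_square mult.commute)
  also have "\<dots> = complex_of_real (\<Sum>i<d. (cmod (v i))\<^sup>2)" by simp
  finally show ?thesis unfolding vnorm_def by (simp add: sum_nonneg)
qed

lemma circ_state_eq: "circ_state n U \<theta> i = U \<theta> i 0"
proof -
  have "circ_state n U \<theta> i = (\<Sum>j\<in>{0}. U \<theta> i j * ket0 j)"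
    unfolding circ_state_def mat_app_def
    by (rule sum.mono_neutral_right) (use qdim_pos[of n] in \<open>auto simp: ket0_def\<close>)
  then show ?thesis by (simp add: ket0_def)
qed

lemma circ_vnorm:
  assumes "unitary_mat (qdim n) (U \<theta>)"
  shows "vnorm (qdim n) (circ_state n U \<theta>) = 1"
proof -
  have "(\<Sum>k<qdim n. cnj (U \<theta> k 0) * U \<theta> k 0) = 1"
    using assms qdim_pos[of n] unfolding unitary_mat_def by auto
  then have "complex_of_real ((vnorm (qdim n) (circ_state n U \<theta>))\<^sup>2) = 1"
    unfolding cinner_self[symmetric] cinner_def circ_state_eq .
  then have "(vnorm (qdim n) (circ_state n U \<theta>))\<^sup>2 = 1"
    using of_real_eq_1_iff by blast
  then show ?thesis using vnorm_nonneg[of "qdim n" "circ_state n U \<theta>"] by (simp add: power2_eq_1_iff)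
qed

lemma phase_norm: "cmod (phase \<alpha> lam \<theta>) \<le> 1"
  unfolding phase_def by (cases "\<alpha> lam \<theta> = 0") (simp_all add: norm_divide)

lemma Xval_bound:
  assumes "unitary_mat (qdim n) (U (fst t))" "unitary_mat (qdim n) (U (snd t))"
  shows "cmod (Xval n \<alpha> U lam Op t) \<le> spec_norm (qdim n) Op"
proof -
  have "cmod (cinner (qdim n) (circ_state n U (snd t)) (mat_app (qdim n) Op (circ_state n U (fst t))))
      \<le> vnorm (qdim n) (circ_state n U (snd t)) * vnorm (qdim n) (mat_app (qdim n) Op (circ_state n U (fst t)))"
    by (rule cinner_CS)
  also have "\<dots> \<le> 1 * (spec_norm (qdim n) Op * 1)"
    using spec_norm_bound[of "qdim n" Op "circ_state n U (fst t)"] circ_vnorm[of n U "fst t", OF assms(1)] circ_vnorm[of n U "snd t", OF assms(2)]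
    by simp
  finally have c: "cmod (cinner (qdim n) (circ_state n U (snd t)) (mat_app (qdim n) Op (circ_state n U (fst t))))
      \<le> spec_norm (qdim n) Op" by simp
  have "cmod (Xval n \<alpha> U lam Op t) = cmod (phase \<alpha> lam (fst t)) * cmod (phase \<alpha> lam (snd t)) *
     cmod (cinner (qdim n) (circ_state n U (snd t)) (mat_app (qdim n) Op (circ_state n U (fst t))))"
    unfolding Xval_def by (simp add: norm_mult)
  also have "\<dots> \<le> 1 * 1 * spec_norm (qdim n) Op"
    by (intro mult_mono c phase_norm) (auto simp: spec_norm_nonneg qdim_pos)
  finally show ?thesis by simp
qed

lemma Xval_id_bound:
  assumes "unitary_mat (qdim n) (U (fst t))" "unitary_mat (qdim n) (U (snd t))"
  shows "cmod (Xval n \<alpha> U lam id_op t) \<le> 1"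
proof -
  have c: "cmod (cinner (qdim n) (circ_state n U (snd t)) (mat_app (qdim n) id_op (circ_state n U (fst t))))
      \<le> 1"
    unfolding cinner_id using cinner_CS[of "qdim n" "circ_state n U (snd t)" "circ_state n U (fst t)"]
      circ_vnorm[of n U "fst t", OF assms(1)] circ_vnorm[of n U "snd t", OF assms(2)] by simp
  have "cmod (Xval n \<alpha> U lam id_op t) = cmod (phase \<alpha> lam (fst t)) * cmod (phase \<alpha> lam (snd t)) *
     cmod (cinner (qdim n) (circ_state n U (snd t)) (mat_app (qdim n) id_op (circ_state n U (fst t))))"
    unfolding Xval_def by (simp add: norm_mult)
  also have "\<dots> \<le> 1 * 1 * 1"
    by (intro mult_mono c phase_norm) auto
  finally show ?thesis by simp
qed

lemma expval_id: "expval n \<Theta> \<alpha> U lam id_op = complex_of_real ((vnorm (qdim n) (psi n \<Theta> \<alpha> U lam))\<^sup>2)"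
  unfolding expval_def cinner_id cinner_self ..

lemma expval_bound: "cmod (expval n \<Theta> \<alpha> U lam Op) \<le> spec_norm (qdim n) Op * Re (expval n \<Theta> \<alpha> U lam id_op)"
proof -
  let ?p = "psi n \<Theta> \<alpha> U lam"
  have "cmod (expval n \<Theta> \<alpha> U lam Op) \<le> vnorm (qdim n) ?p * vnorm (qdim n) (mat_app (qdim n) Op ?p)"
    unfolding expval_def by (rule cinner_CS)
  also have "\<dots> \<le> vnorm (qdim n) ?p * (spec_norm (qdim n) Op * vnorm (qdim n) ?p)"
    by (intro mult_left_mono spec_norm_bound vnorm_nonneg)
  finally show ?thesis unfolding expval_id by (simp add: power2_eq_square mult_ac)
qed

lemma sets_P[simp, measurable_cong]: "sets (Pmeas \<Theta> \<alpha> lam) = sets borel"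
  unfolding Pmeas_def by simp

lemma space_P[simp]: "space (Pmeas \<Theta> \<alpha> lam) = UNIV"
  unfolding Pmeas_def by simp


context
  fixes \<Theta> :: "(real^'k::finite) set" and \<alpha> :: "'p \<Rightarrow> real^'k \<Rightarrow> complex" and lam :: 'p
  assumes Theta_meas: "\<Theta> \<in> sets lborel" and alpha_meas: "\<alpha> lam \<in> borel_measurable lborel"
    and C_finite: "set_integrable lborel \<Theta> (\<lambda>\<theta>. cmod (\<alpha> lam \<theta>))" and C_pos: "Cnorm \<Theta> \<alpha> lam > 0"
begin

lemma alpha_meas_borel[measurable]: "\<alpha> lam \<in> borel_measurable borel"
  using alpha_meas by (simp add: measurable_cong_sets[OF sets_lborel refl])

lemma Theta_borel[measurable]: "\<Theta> \<in> sets borel"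
  using Theta_meas by simp

lemma Pdens_meas[measurable]: "Pdens \<Theta> \<alpha> lam \<in> borel_measurable borel"
  unfolding Pdens_def by measurable

lemma phase_meas[measurable]: "phase \<alpha> lam \<in> borel_measurable borel"
  unfolding phase_def by measurable

lemma Pdens_nonneg: "Pdens \<Theta> \<alpha> lam \<theta> \<ge> 0"
  unfolding Pdens_def using C_pos by simp

lemma P_prob: "prob_space (Pmeas \<Theta> \<alpha> lam)"
proof (rule prob_spaceI)
  have int: "integrable lborel (\<lambda>\<theta>. indicator \<Theta> \<theta> * Pdens \<Theta> \<alpha> lam \<theta>)"
  proof -
    have "integrable lborel (\<lambda>\<theta>. (indicator \<Theta> \<theta> * cmod (\<alpha> lam \<theta>)) / Cnorm \<Theta> \<alpha> lam)"
      using C_finite unfolding set_integrable_def by (intro integrable_divide_zero) simp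
    then show ?thesis unfolding Pdens_def by simp
  qed
  have "emeasure (Pmeas \<Theta> \<alpha> lam) (space (Pmeas \<Theta> \<alpha> lam))
      = (\<integral>\<^sup>+\<theta>. ennreal (indicator \<Theta> \<theta> * Pdens \<Theta> \<alpha> lam \<theta>) \<partial>lborel)"
    unfolding Pmeas_def by (simp add: emeasure_density)
  also have "\<dots> = ennreal (\<integral>\<theta>. indicator \<Theta> \<theta> * Pdens \<Theta> \<alpha> lam \<theta> \<partial>lborel)"
    by (rule nn_integral_eq_integral[OF int]) (simp add: Pdens_nonneg)
  also have "(\<integral>\<theta>. indicator \<Theta> \<theta> * Pdens \<Theta> \<alpha> lam \<theta> \<partial>lborel) = Cnorm \<Theta> \<alpha> lam / Cnorm \<Theta> \<alpha> lam"
  proof -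
    have "(\<integral>\<theta>. indicator \<Theta> \<theta> * Pdens \<Theta> \<alpha> lam \<theta> \<partial>lborel)
        = (\<integral>\<theta>. (indicator \<Theta> \<theta> * cmod (\<alpha> lam \<theta>)) / Cnorm \<Theta> \<alpha> lam \<partial>lborel)"
      unfolding Pdens_def by simp
    also have "\<dots> = Cnorm \<Theta> \<alpha> lam / Cnorm \<Theta> \<alpha> lam"
      unfolding integral_divide_zero Cnorm_def set_lebesgue_integral_def by simp
    finally show ?thesis .
  qed
  also have "\<dots> = 1" using C_pos by simp
  finally show "emeasure (Pmeas \<Theta> \<alpha> lam) (space (Pmeas \<Theta> \<alpha> lam)) = 1" by simp
qed

lemma AE_P: "AE \<theta> in Pmeas \<Theta> \<alpha> lam. \<theta> \<in> \<Theta>"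
  unfolding Pmeas_def
  by (subst AE_density) (auto simp: indicator_def)

lemma pair_P: "pair_prob_space (Pmeas \<Theta> \<alpha> lam) (Pmeas \<Theta> \<alpha> lam)"
  using P_prob by (simp add: pair_prob_space_def pair_sigma_finite_def prob_space_imp_sigma_finite)

lemma PP_prob: "prob_space (Pmeas \<Theta> \<alpha> lam \<Otimes>\<^sub>M Pmeas \<Theta> \<alpha> lam)"
  using P_prob by (simp add: prob_space_pair)

lemma AE_PP: "AE t in Pmeas \<Theta> \<alpha> lam \<Otimes>\<^sub>M Pmeas \<Theta> \<alpha> lam. t \<in> \<Theta> \<times> \<Theta>"
proof (rule pair_sigma_finite.AE_pair_measure)
  show "pair_sigma_finite (Pmeas \<Theta> \<alpha> lam) (Pmeas \<Theta> \<alpha> lam)"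
    using pair_P by (simp add: pair_prob_space_def)
  show "{x \<in> space (Pmeas \<Theta> \<alpha> lam \<Otimes>\<^sub>M Pmeas \<Theta> \<alpha> lam). x \<in> \<Theta> \<times> \<Theta>} \<in> sets (Pmeas \<Theta> \<alpha> lam \<Otimes>\<^sub>M Pmeas \<Theta> \<alpha> lam)"
    by measurable
  show "AE x in Pmeas \<Theta> \<alpha> lam. AE y in Pmeas \<Theta> \<alpha> lam. (x, y) \<in> \<Theta> \<times> \<Theta>"
    using AE_P by eventually_elim (use AE_P in auto)
qed

end

definition gfun :: "nat \<Rightarrow> ('p \<Rightarrow> real^'k \<Rightarrow> complex) \<Rightarrow> (real^'k \<Rightarrow> nat \<Rightarrow> nat \<Rightarrow> complex) \<Rightarrow> 'p \<Rightarrow> nat \<Rightarrow> real^'k \<Rightarrow> complex" where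
  "gfun n \<alpha> U lam i \<theta> = phase \<alpha> lam \<theta> * circ_state n U \<theta> i"

lemma cnj_meas: "cnj \<in> borel_measurable borel"
  by (intro borel_measurable_continuous_onI continuous_on_cnj continuous_on_id)

lemma cnj_meas_comp: "f \<in> borel_measurable M \<Longrightarrow> (\<lambda>x. cnj (f x)) \<in> borel_measurable M"
  using measurable_compose[OF _ cnj_meas] by blast

lemma cmod_le_vnorm: "i < d \<Longrightarrow> cmod (v i) \<le> vnorm d v"
  unfolding vnorm_def by (rule real_le_rsqrt, rule member_le_sum) auto

lemma Xval_expand: "Xval n \<alpha> U lam Op t =
   (\<Sum>i<qdim n. \<Sum>j<qdim n. Op i j * (cnj (gfun n \<alpha> U lam i (snd t)) * gfun n \<alpha> U lam j (fst t)))"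
proof -
  define a where "a = phase \<alpha> lam (fst t) * cnj (phase \<alpha> lam (snd t))"
  have "Xval n \<alpha> U lam Op t = (\<Sum>i<qdim n. \<Sum>j<qdim n. a * (cnj (circ_state n U (snd t) i) * (Op i j * circ_state n U (fst t) j)))"
    unfolding Xval_def cinner_def mat_app_def a_def by (simp only: sum_distrib_left)
  also have "\<dots> = (\<Sum>i<qdim n. \<Sum>j<qdim n. Op i j * (cnj (gfun n \<alpha> U lam i (snd t)) * gfun n \<alpha> U lam j (fst t)))"
    unfolding a_def gfun_def by (intro sum.cong refl) (simp add: algebra_simps)
  finally show ?thesis .
qed

context
  fixes \<Theta> :: "(real^'k::finite) set" and \<alpha> :: "'p \<Rightarrow> real^'k \<Rightarrow> complex" and lam :: 'p
    and n :: nat and U :: "real^'k \<Rightarrow> nat \<Rightarrow> nat \<Rightarrow> complex"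
  assumes Theta_meas: "\<Theta> \<in> sets lborel" and alpha_meas: "\<alpha> lam \<in> borel_measurable lborel"
    and C_finite: "set_integrable lborel \<Theta> (\<lambda>\<theta>. cmod (\<alpha> lam \<theta>))" and C_pos: "Cnorm \<Theta> \<alpha> lam > 0"
    and U_meas: "\<And>i j. (\<lambda>\<theta>. U \<theta> i j) \<in> borel_measurable lborel"
    and U_unitary: "\<And>\<theta>. \<theta> \<in> \<Theta> \<Longrightarrow> unitary_mat (qdim n) (U \<theta>)"
begin

lemma U_meas_borel: "(\<lambda>\<theta>. U \<theta> i j) \<in> borel_measurable borel"
  using U_meas[of i j] unfolding measurable_cong_sets[OF sets_lborel refl] .

lemma circ_meas[measurable]: "(\<lambda>\<theta>. circ_state n U \<theta> i) \<in> borel_measurable borel"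
  unfolding circ_state_eq by (rule U_meas_borel)

lemma g_meas[measurable]: "gfun n \<alpha> U lam i \<in> borel_measurable borel"
  unfolding gfun_def[abs_def]
  by (intro borel_measurable_times circ_meas phase_meas[OF Theta_meas alpha_meas C_finite C_pos])

lemma g_bound: "\<theta> \<in> \<Theta> \<Longrightarrow> i < qdim n \<Longrightarrow> cmod (gfun n \<alpha> U lam i \<theta>) \<le> 1"
proof -
  assume a: "\<theta> \<in> \<Theta>" "i < qdim n"
  have "cmod (circ_state n U \<theta> i) \<le> 1"
    using cmod_le_vnorm[OF a(2), of "circ_state n U \<theta>"] circ_vnorm[of n U \<theta>, OF U_unitary[OF a(1)]] by simp
  then show ?thesis unfolding gfun_def norm_mult
    using phase_norm[of \<alpha> lam \<theta>] by (simp add: mult_le_one)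
qed

abbreviation "PM \<equiv> Pmeas \<Theta> \<alpha> lam"

lemma g_int: "i < qdim n \<Longrightarrow> integrable PM (gfun n \<alpha> U lam i)"
proof -
  assume i: "i < qdim n"
  interpret prob_space PM by (rule P_prob[OF Theta_meas alpha_meas C_finite C_pos])
  show ?thesis
  proof (rule integrable_const_bound[where B=1])
    show "AE x in PM. norm (gfun n \<alpha> U lam i x) \<le> 1"
      using AE_P[OF Theta_meas alpha_meas C_finite C_pos] by eventually_elim (use g_bound i in auto)
    show "gfun n \<alpha> U lam i \<in> borel_measurable PM"
      unfolding measurable_cong_sets[OF sets_P refl] by (rule g_meas)
  qed
qed

lemma psi_eq: "psi n \<Theta> \<alpha> U lam i = (\<integral>\<theta>. gfun n \<alpha> U lam i \<theta> \<partial>PM)"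
proof -
  have "(\<integral>\<theta>. gfun n \<alpha> U lam i \<theta> \<partial>PM)
      = (\<integral>\<theta>. (indicator \<Theta> \<theta> * Pdens \<Theta> \<alpha> lam \<theta>) *\<^sub>R gfun n \<alpha> U lam i \<theta> \<partial>lborel)"
    unfolding Pmeas_def
  proof (rule integral_density)
    show "gfun n \<alpha> U lam i \<in> borel_measurable lborel"
      unfolding measurable_cong_sets[OF sets_lborel refl] by (rule g_meas)
    show "(\<lambda>\<theta>. indicator \<Theta> \<theta> * Pdens \<Theta> \<alpha> lam \<theta>) \<in> borel_measurable lborel"
      unfolding measurable_cong_sets[OF sets_lborel refl]
      by (intro borel_measurable_times borel_measurable_indicator Pdens_meas[OF Theta_meas alpha_meas C_finite C_pos]
           Theta_borel[OF Theta_meas alpha_meas C_finite C_pos])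
    show "AE x in lborel. 0 \<le> indicator \<Theta> x * Pdens \<Theta> \<alpha> lam x"
      by (intro AE_I2 mult_nonneg_nonneg Pdens_nonneg[OF Theta_meas alpha_meas C_finite C_pos]) simp
  qed
  also have "\<dots> = psi n \<Theta> \<alpha> U lam i"
    unfolding psi_def set_lebesgue_integral_def gfun_def
    by (rule Bochner_Integration.integral_cong[OF refl]) (simp add: scaleR_conv_of_real mult_ac)
  finally show ?thesis ..
qed

lemma g_meas_P: "gfun n \<alpha> U lam i \<in> borel_measurable PM"
  unfolding measurable_cong_sets[OF sets_P refl] by (rule g_meas)

lemma prod_meas: "(\<lambda>t. cnj (gfun n \<alpha> U lam i (snd t)) * gfun n \<alpha> U lam j (fst t)) \<in> borel_measurable (PM \<Otimes>\<^sub>M PM)"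
  by (intro borel_measurable_times cnj_meas_comp measurable_compose[OF measurable_fst g_meas_P]
        measurable_compose[OF measurable_snd g_meas_P])

lemma Xval_meas: "Xval n \<alpha> U lam Op \<in> borel_measurable (PM \<Otimes>\<^sub>M PM)"
  unfolding Xval_expand[abs_def]
  by (intro borel_measurable_sum borel_measurable_times borel_measurable_const prod_meas)

lemma prod_int:
  assumes "i < qdim n" "j < qdim n"
  shows "integrable (PM \<Otimes>\<^sub>M PM) (\<lambda>t. cnj (gfun n \<alpha> U lam i (snd t)) * gfun n \<alpha> U lam j (fst t))"
proof -
  interpret prob_space "PM \<Otimes>\<^sub>M PM" by (rule PP_prob[OF Theta_meas alpha_meas C_finite C_pos])
  show ?thesis
  proof (rule integrable_const_bound[where B=1])
    show "AE t in PM \<Otimes>\<^sub>M PM. norm (cnj (gfun n \<alpha> U lam i (snd t)) * gfun n \<alpha> U lam j (fst t)) \<le> 1"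
      using AE_PP[OF Theta_meas alpha_meas C_finite C_pos]
    proof eventually_elim
      case (elim t)
      then show ?case using g_bound[of "fst t" j] g_bound[of "snd t" i] assms
        by (auto simp: norm_mult intro!: mult_le_one)
    qed
  qed (rule prod_meas)
qed

lemma prod_integral:
  assumes "i < qdim n" "j < qdim n"
  shows "(\<integral>t. cnj (gfun n \<alpha> U lam i (snd t)) * gfun n \<alpha> U lam j (fst t) \<partial>(PM \<Otimes>\<^sub>M PM))
     = cnj (psi n \<Theta> \<alpha> U lam i) * psi n \<Theta> \<alpha> U lam j"
proof -
  interpret pair_prob_space PM PM by (rule pair_P[OF Theta_meas alpha_meas C_finite C_pos])
  have "(\<integral>t. cnj (gfun n \<alpha> U lam i (snd t)) * gfun n \<alpha> U lam j (fst t) \<partial>(PM \<Otimes>\<^sub>M PM))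
     = (\<integral>x. (\<integral>y. cnj (gfun n \<alpha> U lam i y) * gfun n \<alpha> U lam j x \<partial>PM) \<partial>PM)"
    using integral_fst'[OF prod_int[OF assms]] by simp
  also have "\<dots> = cnj (psi n \<Theta> \<alpha> U lam i) * psi n \<Theta> \<alpha> U lam j"
    unfolding psi_eq by simp
  finally show ?thesis .
qed

lemma mean_eq: "(\<integral>t. Xval n \<alpha> U lam Op t \<partial>(PM \<Otimes>\<^sub>M PM)) = expval n \<Theta> \<alpha> U lam Op"
proof -
  have "(\<integral>t. Xval n \<alpha> U lam Op t \<partial>(PM \<Otimes>\<^sub>M PM))
     = (\<Sum>i<qdim n. \<Sum>j<qdim n. Op i j * (\<integral>t. cnj (gfun n \<alpha> U lam i (snd t)) * gfun n \<alpha> U lam j (fst t) \<partial>(PM \<Otimes>\<^sub>M PM)))"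
    unfolding Xval_expand
  proof (subst Bochner_Integration.integral_sum, goal_cases)
    case (1 i)
    then show ?case by (intro Bochner_Integration.integrable_sum Bochner_Integration.integrable_mult_right prod_int) auto
  next
    case 2
    show ?case
    proof (intro sum.cong refl, subst Bochner_Integration.integral_sum, goal_cases)
      case (1 i j)
      then show ?case by (intro Bochner_Integration.integrable_mult_right prod_int) auto
    next
      case (2 i)
      then show ?case by simp
    qed
  qed
  also have "\<dots> = (\<Sum>i<qdim n. \<Sum>j<qdim n. Op i j * (cnj (psi n \<Theta> \<alpha> U lam i) * psi n \<Theta> \<alpha> U lam j))"
    by (intro sum.cong refl) (simp add: prod_integral)
  also have "\<dots> = expval n \<Theta> \<alpha> U lam Op"
    unfolding expval_def cinner_def mat_app_def
    by (simp only: sum_distrib_left) (intro sum.cong refl, simp add: algebra_simps)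
  finally show ?thesis .
qed

end

lemma bind_integral_nonneg:
  fixes f :: "'b \<Rightarrow> real"
  assumes N: "N \<in> measurable M (subprob_algebra B)" and Mne: "space M \<noteq> {}"
    and f: "f \<in> borel_measurable B" and nn: "\<And>y. 0 \<le> f y" and int: "integrable (M \<bind> N) f"
  shows "AE x in M. integrable (N x) f"
    and "integrable M (\<lambda>x. \<integral>y. f y \<partial>N x)"
    and "(\<integral>y. f y \<partial>(M \<bind> N)) = (\<integral>x. (\<integral>y. f y \<partial>N x) \<partial>M)"
proof -
  have fe: "(\<lambda>y. ennreal (f y)) \<in> borel_measurable B" using f by measurable
  have sb: "sets (M \<bind> N) = sets B" by (rule sets_bind[OF sets_kernel[OF N] Mne])
  have fb: "f \<in> borel_measurable (M \<bind> N)" using f unfolding measurable_cong_sets[OF sb refl] .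
  have fNx: "f \<in> borel_measurable (N x)" if "x \<in> space M" for x
    using f unfolding measurable_cong_sets[OF sets_kernel[OF N that] refl] .
  have "(\<integral>\<^sup>+y. ennreal (f y) \<partial>(M \<bind> N)) < \<infinity>"
    using int unfolding integrable_iff_bounded using nn by simp
  then have fin: "(\<integral>\<^sup>+x. (\<integral>\<^sup>+y. ennreal (f y) \<partial>N x) \<partial>M) < \<infinity>"
    unfolding nn_integral_bind[OF fe N] .
  have nm: "(\<lambda>x. \<integral>\<^sup>+y. ennreal (f y) \<partial>N x) \<in> borel_measurable M"
    by (rule measurable_compose[OF N nn_integral_measurable_subprob_algebra[OF fe]])
  have AEfin: "AE x in M. (\<integral>\<^sup>+y. ennreal (f y) \<partial>N x) \<noteq> \<infinity>"
    by (rule nn_integral_PInf_AE[OF nm]) (use fin in auto)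
  show AEint: "AE x in M. integrable (N x) f"
    using AE_space AEfin
  proof eventually_elim
    case (elim x)
    then have x: "x \<in> space M" and ne: "(\<integral>\<^sup>+y. ennreal (f y) \<partial>N x) \<noteq> \<infinity>" by auto
    show "integrable (N x) f"
      by (rule integrableI_nonneg[OF fNx[OF x]]) (use ne nn in \<open>auto simp: less_top\<close>)
  qed
  have AEeq: "AE x in M. (\<integral>\<^sup>+y. ennreal (f y) \<partial>N x) = ennreal (\<integral>y. f y \<partial>N x)"
    using AEint
  proof eventually_elim
    case (elim x)
    then have i: "integrable (N x) f" by auto
    show "(\<integral>\<^sup>+y. ennreal (f y) \<partial>N x) = ennreal (\<integral>y. f y \<partial>N x)"
      by (rule nn_integral_eq_integral[OF i]) (simp add: nn)
  qed
  have hm: "(\<lambda>x. \<integral>y. f y \<partial>N x) \<in> borel_measurable M"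
    by (rule measurable_compose[OF N integral_measurable_subprob_algebra[OF f]])
  have hnn: "0 \<le> (\<integral>y. f y \<partial>N x)" for x by (rule Bochner_Integration.integral_nonneg) (simp add: nn)
  have eq2: "(\<integral>\<^sup>+x. ennreal (\<integral>y. f y \<partial>N x) \<partial>M) = (\<integral>\<^sup>+x. (\<integral>\<^sup>+y. ennreal (f y) \<partial>N x) \<partial>M)"
    by (rule nn_integral_cong_AE) (use AEeq in \<open>auto elim: AE_mp\<close>)
  show "integrable M (\<lambda>x. \<integral>y. f y \<partial>N x)"
    by (rule integrableI_nonneg[OF hm]) (use fin eq2 hnn in auto)
  have "(\<integral>y. f y \<partial>(M \<bind> N)) = enn2real (\<integral>\<^sup>+y. ennreal (f y) \<partial>(M \<bind> N))"
    by (rule integral_eq_nn_integral[OF fb]) (simp add: nn)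
  also have "\<dots> = enn2real (\<integral>\<^sup>+x. ennreal (\<integral>y. f y \<partial>N x) \<partial>M)"
    unfolding nn_integral_bind[OF fe N] eq2 ..
  also have "\<dots> = (\<integral>x. (\<integral>y. f y \<partial>N x) \<partial>M)"
    by (rule integral_eq_nn_integral[OF hm, symmetric]) (simp add: hnn)
  finally show "(\<integral>y. f y \<partial>(M \<bind> N)) = (\<integral>x. (\<integral>y. f y \<partial>N x) \<partial>M)" .
qed

lemma bind_integral_real:
  fixes f :: "'b \<Rightarrow> real"
  assumes N: "N \<in> measurable M (subprob_algebra B)" and Mne: "space M \<noteq> {}"
    and f: "f \<in> borel_measurable B" and int: "integrable (M \<bind> N) f"
  shows "AE x in M. integrable (N x) f"
    and "integrable M (\<lambda>x. \<integral>y. f y \<partial>N x)"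
    and "(\<integral>y. f y \<partial>(M \<bind> N)) = (\<integral>x. (\<integral>y. f y \<partial>N x) \<partial>M)"
proof -
  define fp where "fp y = max 0 (f y)" for y
  define fm where "fm y = max 0 (- f y)" for y
  have fpm: "fp \<in> borel_measurable B" "fm \<in> borel_measurable B" unfolding fp_def[abs_def] fm_def[abs_def] using f by measurable
  have ip: "integrable (M \<bind> N) fp" unfolding fp_def using int by auto
  have im: "integrable (M \<bind> N) fm" unfolding fm_def using int by auto
  note P = bind_integral_nonneg[OF N Mne fpm(1) _ ip] and Mi = bind_integral_nonneg[OF N Mne fpm(2) _ im]
  have nnp: "\<And>y. 0 \<le> fp y" and nnm: "\<And>y. 0 \<le> fm y" unfolding fp_def fm_def by auto
  have fdec: "f y = fp y - fm y" for y unfolding fp_def fm_def by auto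
  have AE2: "AE x in M. integrable (N x) fp \<and> integrable (N x) fm"
    using P(1)[OF nnp] Mi(1)[OF nnm] by eventually_elim auto
  show AEi: "AE x in M. integrable (N x) f"
    using AE2 by eventually_elim (auto simp: fdec[abs_def])
  have AEe: "AE x in M. (\<integral>y. f y \<partial>N x) = (\<integral>y. fp y \<partial>N x) - (\<integral>y. fm y \<partial>N x)"
    using AE2 by eventually_elim (simp add: fdec[abs_def])
  have hm: "(\<lambda>x. \<integral>y. f y \<partial>N x) \<in> borel_measurable M"
    by (rule measurable_compose[OF N integral_measurable_subprob_algebra[OF f]])
  have idiff: "integrable M (\<lambda>x. (\<integral>y. fp y \<partial>N x) - (\<integral>y. fm y \<partial>N x))"
    using P(2)[OF nnp] Mi(2)[OF nnm] by auto
  show "integrable M (\<lambda>x. \<integral>y. f y \<partial>N x)"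
    by (rule integrable_cong_AE_imp[OF idiff hm]) (use AEe in \<open>auto elim: AE_mp\<close>)
  have "(\<integral>y. f y \<partial>(M \<bind> N)) = (\<integral>y. fp y \<partial>(M \<bind> N)) - (\<integral>y. fm y \<partial>(M \<bind> N))"
    unfolding fdec[abs_def] using ip im by simp
  also have "\<dots> = (\<integral>x. (\<integral>y. fp y \<partial>N x) \<partial>M) - (\<integral>x. (\<integral>y. fm y \<partial>N x) \<partial>M)"
    using P(3)[OF nnp] Mi(3)[OF nnm] by simp
  also have "\<dots> = (\<integral>x. (\<integral>y. fp y \<partial>N x) - (\<integral>y. fm y \<partial>N x) \<partial>M)"
    using P(2)[OF nnp] Mi(2)[OF nnm] by simp
  also have "\<dots> = (\<integral>x. (\<integral>y. f y \<partial>N x) \<partial>M)"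
    by (rule integral_cong_AE) (use idiff hm AEe in \<open>auto elim: AE_mp\<close>)
  finally show "(\<integral>y. f y \<partial>(M \<bind> N)) = (\<integral>x. (\<integral>y. f y \<partial>N x) \<partial>M)" .
qed

lemma cmod_diff_sq: "(cmod (a - c))\<^sup>2 = (cmod a)\<^sup>2 - 2 * Re (a * cnj c) + (cmod c)\<^sup>2"
  unfolding cmod_power2 by (simp add: power2_eq_square algebra_simps)

lemma var_decomp:
  fixes f :: "'a \<Rightarrow> complex"
  assumes R: "prob_space R" and fi: "integrable R f" and f2: "integrable R (\<lambda>x. (cmod (f x - c0))\<^sup>2)"
  shows "integrable R (\<lambda>x. (cmod (f x - c))\<^sup>2)"
    and "(\<integral>x. (cmod (f x - c))\<^sup>2 \<partial>R) = (\<integral>x. (cmod (f x - integral\<^sup>L R f))\<^sup>2 \<partial>R) + (cmod (integral\<^sup>L R f - c))\<^sup>2"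
proof -
  interpret prob_space R by (rule R)
  have reint: "integrable R (\<lambda>x. Re (f x * cnj c))" for c
    by (rule integrable_Re, rule integrable_mult_left, rule fi)
  have reval: "(\<integral>x. Re (f x * cnj c) \<partial>R) = Re (integral\<^sup>L R f * cnj c)" for c
  proof -
    have i: "integrable R (\<lambda>x. f x * cnj c)" by (rule integrable_mult_left, rule fi)
    show ?thesis unfolding integral_Re[OF i] integral_mult_left_zero ..
  qed
  have eq0: "(cmod (f x))\<^sup>2 = (cmod (f x - c0))\<^sup>2 + 2 * Re (f x * cnj c0) - (cmod c0)\<^sup>2" for x
    by (simp add: cmod_diff_sq)
  have sq: "integrable R (\<lambda>x. (cmod (f x))\<^sup>2)"
  proof -
    have "integrable R (\<lambda>x. (cmod (f x - c0))\<^sup>2 + 2 * Re (f x * cnj c0) - (cmod c0)\<^sup>2)"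
      by (intro Bochner_Integration.integrable_diff Bochner_Integration.integrable_add
          Bochner_Integration.integrable_mult_right f2 reint integrable_const)
    then show ?thesis unfolding eq0 .
  qed
  show I: "integrable R (\<lambda>x. (cmod (f x - c))\<^sup>2)" for c
  proof -
    have "integrable R (\<lambda>x. (cmod (f x))\<^sup>2 - 2 * Re (f x * cnj c) + (cmod c)\<^sup>2)"
      by (intro Bochner_Integration.integrable_diff Bochner_Integration.integrable_add
          Bochner_Integration.integrable_mult_right sq reint integrable_const)
    then show ?thesis unfolding cmod_diff_sq .
  qed
  have E: "(\<integral>x. (cmod (f x - c))\<^sup>2 \<partial>R) = (\<integral>x. (cmod (f x))\<^sup>2 \<partial>R) - 2 * Re (integral\<^sup>L R f * cnj c) + (cmod c)\<^sup>2" for c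
  proof -
    have "(\<integral>x. (cmod (f x))\<^sup>2 - 2 * Re (f x * cnj c) + (cmod c)\<^sup>2 \<partial>R)
       = (\<integral>x. (cmod (f x))\<^sup>2 \<partial>R) - 2 * (\<integral>x. Re (f x * cnj c) \<partial>R) + (cmod c)\<^sup>2"
    proof -
      have i1: "integrable R (\<lambda>x. (cmod (f x))\<^sup>2 - 2 * Re (f x * cnj c))"
        by (intro Bochner_Integration.integrable_diff Bochner_Integration.integrable_mult_right sq reint)
      have i2: "integrable R (\<lambda>x. 2 * Re (f x * cnj c))"
        by (intro Bochner_Integration.integrable_mult_right reint)
      show ?thesis
        unfolding Bochner_Integration.integral_add[OF i1 integrable_const]
          Bochner_Integration.integral_diff[OF sq i2] integral_mult_right_zero lebesgue_integral_const prob_space by simp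
    qed
    then show ?thesis unfolding cmod_diff_sq reval .
  qed
  show "(\<integral>x. (cmod (f x - c))\<^sup>2 \<partial>R) = (\<integral>x. (cmod (f x - integral\<^sup>L R f))\<^sup>2 \<partial>R) + (cmod (integral\<^sup>L R f - c))\<^sup>2"
  proof -
    have r: "Re (integral\<^sup>L R f * cnj (integral\<^sup>L R f)) = (cmod (integral\<^sup>L R f))\<^sup>2"
      unfolding cmod_power2 by (simp add: power2_eq_square)
    show ?thesis
      unfolding E[of c] E[of "integral\<^sup>L R f"] cmod_diff_sq[of "integral\<^sup>L R f" c] r by simp
  qed
qed

lemma kernel_meas:
  fixes PP :: "'a measure" and Q :: "'a \<Rightarrow> complex measure"
  assumes Qm: "Q \<in> measurable PP (subprob_algebra borel)"
  shows "(\<lambda>t. distr (Q t) (PP \<Otimes>\<^sub>M borel) (\<lambda>z. (t, z))) \<in> measurable PP (subprob_algebra (PP \<Otimes>\<^sub>M borel))"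
proof -
  have "(\<lambda>t. Q t \<bind> (\<lambda>z. return (PP \<Otimes>\<^sub>M borel) (t, z))) \<in> measurable PP (subprob_algebra (PP \<Otimes>\<^sub>M borel))"
    by (rule measurable_bind'[OF Qm]) (simp add: return_measurable)
  moreover have "Q t \<bind> (\<lambda>z. return (PP \<Otimes>\<^sub>M borel) (t, z)) = distr (Q t) (PP \<Otimes>\<^sub>M borel) (\<lambda>z. (t, z))"
    if t: "t \<in> space PP" for t
  proof (rule bind_return_distr')
    have s: "sets (Q t) = sets borel" by (rule sets_kernel[OF Qm t])
    then show "space (Q t) \<noteq> {}" using sets_eq_imp_space_eq[OF s] by simp
    show "(\<lambda>z. (t, z)) \<in> measurable (Q t) (PP \<Otimes>\<^sub>M borel)"
      unfolding measurable_cong_sets[OF s refl] by (rule measurable_Pair1'[OF t])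
  qed
  ultimately show ?thesis by (rule measurable_cong[THEN iffD1, rotated]) simp
qed

lemma distr_snd_bind:
  fixes PP :: "'a measure" and Q :: "'a \<Rightarrow> complex measure"
  assumes Qm: "Q \<in> measurable PP (subprob_algebra borel)" and ne: "space PP \<noteq> {}"
  shows "distr (PP \<bind> (\<lambda>t. distr (Q t) (PP \<Otimes>\<^sub>M borel) (\<lambda>z. (t, z)))) borel snd = PP \<bind> Q"
proof -
  have "distr (PP \<bind> (\<lambda>t. distr (Q t) (PP \<Otimes>\<^sub>M borel) (\<lambda>z. (t, z)))) borel snd
      = PP \<bind> (\<lambda>t. distr (distr (Q t) (PP \<Otimes>\<^sub>M borel) (\<lambda>z. (t, z))) borel snd)"
    by (rule distr_bind[OF kernel_meas[OF Qm] ne measurable_snd])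
  also have "\<dots> = PP \<bind> Q"
  proof (rule bind_cong[OF refl])
    fix t assume t: "t \<in> space PP"
    have s: "sets (Q t) = sets borel" by (rule sets_kernel[OF Qm t])
    have pm: "(\<lambda>z. (t, z)) \<in> measurable (Q t) (PP \<Otimes>\<^sub>M borel)"
      unfolding measurable_cong_sets[OF s refl] by (rule measurable_Pair1'[OF t])
    have "distr (distr (Q t) (PP \<Otimes>\<^sub>M borel) (\<lambda>z. (t, z))) borel snd = distr (Q t) borel (snd \<circ> (\<lambda>z. (t, z)))"
      by (rule distr_distr[OF measurable_snd pm])
    also have "\<dots> = distr (Q t) borel (\<lambda>z. z)" by (simp add: comp_def)
    also have "\<dots> = Q t" by (rule distr_id2[OF s[symmetric]])
    finally show "distr (distr (Q t) (PP \<Otimes>\<^sub>M borel) (\<lambda>z. (t, z))) borel snd = Q t" .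
  qed
  finally show ?thesis .
qed

lemma nu_moments:
  fixes PP :: "'a measure" and Q :: "'a \<Rightarrow> complex measure" and X :: "'a \<Rightarrow> complex"
  assumes PP: "prob_space PP" and Qm: "Q \<in> measurable PP (subprob_algebra borel)"
    and AEA: "AE t in PP. t \<in> A"
    and Qt: "\<And>t. t \<in> A \<Longrightarrow> prob_space (Q t) \<and> has_bochner_integral (Q t) (\<lambda>z. z) (X t) \<and>
        (\<integral>\<^sup>+z. ennreal ((cmod (z - X t))\<^sup>2) \<partial>Q t) \<le> ennreal (\<sigma>\<^sup>2)"
    and Xm: "X \<in> borel_measurable PP"
    and XB: "\<And>t. t \<in> A \<Longrightarrow> cmod (X t) \<le> B"
    and nup: "prob_space (PP \<bind> Q)"
  shows "integrable (PP \<bind> Q) (\<lambda>z. z)"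
    and "(\<integral>z. z \<partial>(PP \<bind> Q)) = (\<integral>t. X t \<partial>PP)"
    and "integrable (PP \<bind> Q) (\<lambda>z. (cmod (z - (\<integral>t. X t \<partial>PP)))\<^sup>2)"
    and "(\<integral>z. (cmod (z - (\<integral>t. X t \<partial>PP)))\<^sup>2 \<partial>(PP \<bind> Q)) \<le> \<sigma>\<^sup>2 + B\<^sup>2"
proof -
  interpret PP: prob_space PP by (rule PP)
  interpret nu: prob_space "PP \<bind> Q" by (rule nup)
  define m where "m = (\<integral>t. X t \<partial>PP)"
  have ne: "space PP \<noteq> {}" by (rule PP.not_empty)
  have AEA': "AE t in PP. t \<in> A \<and> t \<in> space PP" using AEA by (auto intro: AE_space[THEN AE_mp])
  have XI: "integrable PP X"
    by (rule PP.integrable_const_bound[where B=B]) (use AEA XB Xm in \<open>auto elim: AE_mp\<close>)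
  have X2: "integrable PP (\<lambda>t. (cmod (X t - 0))\<^sup>2)"
  proof (rule PP.integrable_const_bound[where B="B\<^sup>2"])
    show "AE t in PP. norm ((cmod (X t - 0))\<^sup>2) \<le> B\<^sup>2"
      using AEA by eventually_elim (use XB in \<open>auto intro!: power_mono\<close>)
  qed (use Xm in measurable)
  note VD = var_decomp[OF PP XI X2]
  have IX: "integrable PP (\<lambda>t. (cmod (X t - m))\<^sup>2)" by (rule VD(1))
  have VX: "(\<integral>t. (cmod (X t - m))\<^sup>2 \<partial>PP) \<le> B\<^sup>2"
  proof -
    have "(\<integral>t. (cmod (X t - 0))\<^sup>2 \<partial>PP) \<le> (\<integral>t. B\<^sup>2 \<partial>PP)"
      by (rule integral_mono_AE[OF X2 PP.integrable_const])
         (use AEA in \<open>eventually_elim, use XB in \<open>auto intro!: power_mono\<close>\<close>)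
    then have "(\<integral>t. (cmod (X t - 0))\<^sup>2 \<partial>PP) \<le> B\<^sup>2" by (simp add: PP.prob_space)
    then have "(\<integral>t. (cmod (X t - m))\<^sup>2 \<partial>PP) + (cmod m)\<^sup>2 \<le> B\<^sup>2" using VD(2)[of 0] unfolding m_def by simp
    moreover have "0 \<le> (cmod m)\<^sup>2" by simp
    ultimately show ?thesis by linarith
  qed
  have sb: "sets (PP \<bind> Q) = sets borel" by (rule sets_bind[OF sets_kernel[OF Qm] ne])
  have inner: "(\<integral>\<^sup>+z. ennreal ((cmod (z - m))\<^sup>2) \<partial>Q t) \<le> ennreal (\<sigma>\<^sup>2 + (cmod (X t - m))\<^sup>2)"
    if t: "t \<in> A" "t \<in> space PP" for t
  proof -
    from Qt[OF t(1)] have Qp: "prob_space (Q t)" and hb: "has_bochner_integral (Q t) (\<lambda>z. z) (X t)"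
      and nn: "(\<integral>\<^sup>+z. ennreal ((cmod (z - X t))\<^sup>2) \<partial>Q t) \<le> ennreal (\<sigma>\<^sup>2)" by auto
    have s: "sets (Q t) = sets borel" by (rule sets_kernel[OF Qm t(2)])
    have idI: "integrable (Q t) (\<lambda>z. z)" and idE: "(\<integral>z. z \<partial>Q t) = X t"
      using hb by (auto simp: has_bochner_integral_iff)
    have m1: "(\<lambda>z. (cmod (z - X t))\<^sup>2) \<in> borel_measurable (Q t)"
      unfolding measurable_cong_sets[OF s refl] by measurable
    have I1: "integrable (Q t) (\<lambda>z. (cmod (z - X t))\<^sup>2)"
      by (rule integrableI_nonneg[OF m1]) (use nn in \<open>auto simp: less_top[symmetric] top_unique\<close>)
    note VQ = var_decomp[OF Qp idI I1]
    have "ennreal (\<integral>z. (cmod (z - X t))\<^sup>2 \<partial>Q t) = (\<integral>\<^sup>+z. ennreal ((cmod (z - X t))\<^sup>2) \<partial>Q t)"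
      by (rule nn_integral_eq_integral[OF I1, symmetric]) simp
    with nn have "ennreal (\<integral>z. (cmod (z - X t))\<^sup>2 \<partial>Q t) \<le> ennreal (\<sigma>\<^sup>2)" by simp
    then have le: "(\<integral>z. (cmod (z - X t))\<^sup>2 \<partial>Q t) \<le> \<sigma>\<^sup>2"
      by (subst (asm) ennreal_le_iff) auto
    have "(\<integral>\<^sup>+z. ennreal ((cmod (z - m))\<^sup>2) \<partial>Q t) = ennreal (\<integral>z. (cmod (z - m))\<^sup>2 \<partial>Q t)"
      by (rule nn_integral_eq_integral[OF VQ(1)]) simp
    also have "(\<integral>z. (cmod (z - m))\<^sup>2 \<partial>Q t) = (\<integral>z. (cmod (z - X t))\<^sup>2 \<partial>Q t) + (cmod (X t - m))\<^sup>2"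
      using VQ(2)[of m] unfolding idE .
    finally show ?thesis using le by (simp add: ennreal_leI)
  qed
  have fe: "(\<lambda>z. ennreal ((cmod (z - m))\<^sup>2)) \<in> borel_measurable borel" by measurable
  have "(\<integral>\<^sup>+z. ennreal ((cmod (z - m))\<^sup>2) \<partial>(PP \<bind> Q)) = (\<integral>\<^sup>+t. (\<integral>\<^sup>+z. ennreal ((cmod (z - m))\<^sup>2) \<partial>Q t) \<partial>PP)"
    by (rule nn_integral_bind[OF fe Qm])
  also have "\<dots> \<le> (\<integral>\<^sup>+t. ennreal (\<sigma>\<^sup>2 + (cmod (X t - m))\<^sup>2) \<partial>PP)"
    by (rule nn_integral_mono_AE) (use AEA' inner in \<open>auto elim: AE_mp\<close>)
  also have "\<dots> = ennreal (\<integral>t. \<sigma>\<^sup>2 + (cmod (X t - m))\<^sup>2 \<partial>PP)"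
    by (rule nn_integral_eq_integral) (use IX in auto)
  also have "(\<integral>t. \<sigma>\<^sup>2 + (cmod (X t - m))\<^sup>2 \<partial>PP) = \<sigma>\<^sup>2 + (\<integral>t. (cmod (X t - m))\<^sup>2 \<partial>PP)"
    using IX by (simp add: PP.prob_space)
  also have "ennreal \<dots> \<le> ennreal (\<sigma>\<^sup>2 + B\<^sup>2)" using VX by (simp add: ennreal_leI)
  finally have nnb: "(\<integral>\<^sup>+z. ennreal ((cmod (z - m))\<^sup>2) \<partial>(PP \<bind> Q)) \<le> ennreal (\<sigma>\<^sup>2 + B\<^sup>2)" .
  have mb: "(\<lambda>z. (cmod (z - m))\<^sup>2) \<in> borel_measurable (PP \<bind> Q)"
    unfolding measurable_cong_sets[OF sb refl] by measurable
  show I2: "integrable (PP \<bind> Q) (\<lambda>z. (cmod (z - m))\<^sup>2)"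
    by (rule integrableI_nonneg[OF mb]) (use nnb in \<open>auto simp: less_top[symmetric] top_unique intro: le_less_trans\<close>)
  have "ennreal (\<integral>z. (cmod (z - m))\<^sup>2 \<partial>(PP \<bind> Q)) = (\<integral>\<^sup>+z. ennreal ((cmod (z - m))\<^sup>2) \<partial>(PP \<bind> Q))"
    by (rule nn_integral_eq_integral[OF I2, symmetric]) simp
  with nnb have "ennreal (\<integral>z. (cmod (z - m))\<^sup>2 \<partial>(PP \<bind> Q)) \<le> ennreal (\<sigma>\<^sup>2 + B\<^sup>2)" by simp
  then show "(\<integral>z. (cmod (z - m))\<^sup>2 \<partial>(PP \<bind> Q)) \<le> \<sigma>\<^sup>2 + B\<^sup>2"
    by (subst (asm) ennreal_le_iff) auto
  show I1: "integrable (PP \<bind> Q) (\<lambda>z. z)"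
  proof (rule Bochner_Integration.integrable_bound)
    show "integrable (PP \<bind> Q) (\<lambda>z. (cmod (z - m))\<^sup>2 + (1 + cmod m))"
      by (intro Bochner_Integration.integrable_add I2 nu.integrable_const)
    show "(\<lambda>z. z) \<in> borel_measurable (PP \<bind> Q)"
      unfolding measurable_cong_sets[OF sb refl] by simp
    show "AE z in PP \<bind> Q. norm z \<le> norm ((cmod (z - m))\<^sup>2 + (1 + cmod m))"
    proof (rule AE_I2)
      fix z :: complex
      have a: "cmod z \<le> cmod (z - m) + cmod m" using norm_triangle_ineq[of "z - m" m] by simp
      have b: "cmod (z - m) \<le> (cmod (z - m))\<^sup>2 + 1"
      proof -
        have "0 \<le> (cmod (z - m) - 1)\<^sup>2" by simp
        moreover have "(cmod (z - m) - 1)\<^sup>2 = (cmod (z - m))\<^sup>2 - 2 * cmod (z - m) + 1"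
          by (simp add: power2_eq_square algebra_simps)
        moreover have "0 \<le> cmod (z - m)" by simp
        ultimately show ?thesis by linarith
      qed
      show "norm z \<le> norm ((cmod (z - m))\<^sup>2 + (1 + cmod m))" using a b by simp
    qed
  qed
  have Qint: "(\<lambda>t. \<integral>z. g z \<partial>Q t) \<in> borel_measurable PP" if g: "g \<in> borel_measurable borel" for g :: "complex \<Rightarrow> real"
    by (rule measurable_compose[OF Qm integral_measurable_subprob_algebra[OF g]])
  have part: "(\<integral>z. g z \<partial>(PP \<bind> Q)) = g (\<integral>t. X t \<partial>PP)"
    if g: "g = Re \<or> g = Im" for g :: "complex \<Rightarrow> real"
  proof -
    have gm: "g \<in> borel_measurable borel" using g by auto
    have gi: "integrable (PP \<bind> Q) g"
      using g I1 by auto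
    have "(\<integral>z. g z \<partial>(PP \<bind> Q)) = (\<integral>t. (\<integral>z. g z \<partial>Q t) \<partial>PP)"
      by (rule bind_integral_real(3)[OF Qm ne gm gi])
    also have "\<dots> = (\<integral>t. g (X t) \<partial>PP)"
    proof (rule integral_cong_AE)
      show "(\<lambda>t. \<integral>z. g z \<partial>Q t) \<in> borel_measurable PP" by (rule Qint[OF gm])
      show "(\<lambda>t. g (X t)) \<in> borel_measurable PP" using g Xm by auto
      show "AE t in PP. (\<integral>z. g z \<partial>Q t) = g (X t)"
        using AEA'
      proof eventually_elim
        case (elim t)
        then have hb: "has_bochner_integral (Q t) (\<lambda>z. z) (X t)" using Qt by auto
        then have idI: "integrable (Q t) (\<lambda>z. z)" and idE: "(\<integral>z. z \<partial>Q t) = X t"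
          by (auto simp: has_bochner_integral_iff)
        show ?case using g integral_Re[OF idI] integral_Im[OF idI] idE by auto
      qed
    qed
    also have "\<dots> = g (\<integral>t. X t \<partial>PP)"
      using g integral_Re[OF XI] integral_Im[OF XI] by auto
    finally show ?thesis .
  qed
  show "(\<integral>z. z \<partial>(PP \<bind> Q)) = (\<integral>t. X t \<partial>PP)"
    using part[of Re] part[of Im] integral_Re[OF I1] integral_Im[OF I1] by (auto intro: complex_eqI)
qed

lemma indep_cross:
  fixes Y :: "nat \<Rightarrow> 'w \<Rightarrow> complex"
  assumes Om: "prob_space \<Omega>" and ind: "prob_space.indep_vars \<Omega> (\<lambda>_. borel) Y I"
    and l: "l \<in> I" and k: "k \<in> I" and lk: "l \<noteq> k"
    and il: "integrable \<Omega> (Y l)" and ik: "integrable \<Omega> (Y k)"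
    and el: "(\<integral>\<omega>. Y l \<omega> \<partial>\<Omega>) = m"
  shows "integrable \<Omega> (\<lambda>\<omega>. (Y l \<omega> - m) * cnj (Y k \<omega> - m))"
    and "(\<integral>\<omega>. (Y l \<omega> - m) * cnj (Y k \<omega> - m) \<partial>\<Omega>) = 0"
proof -
  interpret prob_space \<Omega> by (rule Om)
  define h where "h i z = (if i = l then z - m else cnj (z - m))" for i z
  have hm: "h i \<in> borel_measurable borel" for i
  proof -
    have "(\<lambda>z. cnj z - cnj m) \<in> borel_measurable borel"
      by (rule borel_measurable_diff[OF cnj_meas borel_measurable_const])
    then show ?thesis unfolding h_def[abs_def] by (cases "i = l") auto
  qed
  have ind2: "indep_vars (\<lambda>_. borel) (\<lambda>i \<omega>. h i (Y i \<omega>)) {l, k}"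
    by (rule indep_vars_compose2[OF indep_vars_subset[OF ind] hm]) (use l k in auto)
  have wi: "integrable \<Omega> (\<lambda>\<omega>. h i (Y i \<omega>))" if "i \<in> {l, k}" for i
    using that il ik lk unfolding h_def by (auto)
  have prodeq: "(\<Prod>i\<in>{l, k}. h i (Y i \<omega>)) = (Y l \<omega> - m) * cnj (Y k \<omega> - m)" for \<omega>
    using lk unfolding h_def by simp
  have "integrable \<Omega> (\<lambda>\<omega>. \<Prod>i\<in>{l, k}. h i (Y i \<omega>))"
    by (rule indep_vars_integrable[OF _ ind2 wi]) auto
  then show "integrable \<Omega> (\<lambda>\<omega>. (Y l \<omega> - m) * cnj (Y k \<omega> - m))" unfolding prodeq .
  have "(\<integral>\<omega>. (\<Prod>i\<in>{l, k}. h i (Y i \<omega>)) \<partial>\<Omega>) = (\<Prod>i\<in>{l, k}. \<integral>\<omega>. h i (Y i \<omega>) \<partial>\<Omega>)"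
    by (rule indep_vars_lebesgue_integral[OF _ ind2 wi]) auto
  also have "\<dots> = (\<integral>\<omega>. Y l \<omega> - m \<partial>\<Omega>) * (\<integral>\<omega>. h k (Y k \<omega>) \<partial>\<Omega>)"
    using lk unfolding h_def by simp
  also have "(\<integral>\<omega>. Y l \<omega> - m \<partial>\<Omega>) = 0"
    using il el by (simp add: prob_space)
  finally show "(\<integral>\<omega>. (Y l \<omega> - m) * cnj (Y k \<omega> - m) \<partial>\<Omega>) = 0" unfolding prodeq by simp
qed

lemma sum_var:
  fixes Z :: "nat \<Rightarrow> 'w \<Rightarrow> complex"
  assumes Zc: "\<And>l k. l < M \<Longrightarrow> k < M \<Longrightarrow> l \<noteq> k \<Longrightarrow>
        integrable \<Omega> (\<lambda>\<omega>. Z l \<omega> * cnj (Z k \<omega>)) \<and> (\<integral>\<omega>. Z l \<omega> * cnj (Z k \<omega>) \<partial>\<Omega>) = 0"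
    and Z2: "\<And>l. l < M \<Longrightarrow> integrable \<Omega> (\<lambda>\<omega>. (cmod (Z l \<omega>))\<^sup>2) \<and> (\<integral>\<omega>. (cmod (Z l \<omega>))\<^sup>2 \<partial>\<Omega>) \<le> V"
  shows "integrable \<Omega> (\<lambda>\<omega>. (cmod (\<Sum>l<M. Z l \<omega>))\<^sup>2)"
    and "(\<integral>\<omega>. (cmod (\<Sum>l<M. Z l \<omega>))\<^sup>2 \<partial>\<Omega>) \<le> real M * V"
proof -
  define T where "T l k \<omega> = Z l \<omega> * cnj (Z k \<omega>)" for l k \<omega>
  have Tdiag: "T l l \<omega> = complex_of_real ((cmod (Z l \<omega>))\<^sup>2)" for l \<omega>
    unfolding T_def by (rule complex_norm_square[symmetric])
  have Ti: "integrable \<Omega> (T l k)" if "l < M" "k < M" for l k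
  proof (cases "l = k")
    case True
    have e: "T l l = (\<lambda>\<omega>. complex_of_real ((cmod (Z l \<omega>))\<^sup>2))" by (rule ext) (rule Tdiag)
    show ?thesis unfolding True[symmetric] e complex_of_real_integrable_eq using Z2 that by auto
  next
    case False
    then show ?thesis using Zc that unfolding T_def by auto
  qed
  have Te: "(\<integral>\<omega>. T l k \<omega> \<partial>\<Omega>) = (if l = k then complex_of_real (\<integral>\<omega>. (cmod (Z l \<omega>))\<^sup>2 \<partial>\<Omega>) else 0)"
    if "l < M" "k < M" for l k
  proof (cases "l = k")
    case True
    have e: "T l l = (\<lambda>\<omega>. complex_of_real ((cmod (Z l \<omega>))\<^sup>2))" by (rule ext) (rule Tdiag)
    show ?thesis unfolding True[symmetric] e integral_complex_of_real by simp
  next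
    case False
    then show ?thesis using Zc that unfolding T_def by auto
  qed
  have Seq: "complex_of_real ((cmod (\<Sum>l<M. Z l \<omega>))\<^sup>2) = (\<Sum>l<M. \<Sum>k<M. T l k \<omega>)" for \<omega>
    unfolding T_def complex_norm_square cnj_sum sum_product ..
  have SI: "integrable \<Omega> (\<lambda>\<omega>. \<Sum>l<M. \<Sum>k<M. T l k \<omega>)"
    by (intro Bochner_Integration.integrable_sum) (auto intro: Ti)
  then show I: "integrable \<Omega> (\<lambda>\<omega>. (cmod (\<Sum>l<M. Z l \<omega>))\<^sup>2)"
    unfolding Seq[symmetric] complex_of_real_integrable_eq .
  have "complex_of_real (\<integral>\<omega>. (cmod (\<Sum>l<M. Z l \<omega>))\<^sup>2 \<partial>\<Omega>) = (\<integral>\<omega>. (\<Sum>l<M. \<Sum>k<M. T l k \<omega>) \<partial>\<Omega>)"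
    unfolding Seq[symmetric] integral_complex_of_real ..
  also have "\<dots> = (\<Sum>l<M. \<Sum>k<M. \<integral>\<omega>. T l k \<omega> \<partial>\<Omega>)"
  proof (subst Bochner_Integration.integral_sum)
    show "\<And>l. l \<in> {..<M} \<Longrightarrow> integrable \<Omega> (\<lambda>\<omega>. \<Sum>k<M. T l k \<omega>)"
      by (intro Bochner_Integration.integrable_sum) (auto intro: Ti)
    show "(\<Sum>l<M. \<integral>\<omega>. (\<Sum>k<M. T l k \<omega>) \<partial>\<Omega>) = (\<Sum>l<M. \<Sum>k<M. \<integral>\<omega>. T l k \<omega> \<partial>\<Omega>)"
      by (intro sum.cong refl, subst Bochner_Integration.integral_sum) (auto intro: Ti)
  qed
  also have "\<dots> = (\<Sum>l<M. \<Sum>k<M. if l = k then complex_of_real (\<integral>\<omega>. (cmod (Z l \<omega>))\<^sup>2 \<partial>\<Omega>) else 0)"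
    by (intro sum.cong refl) (simp add: Te)
  also have "\<dots> = complex_of_real (\<Sum>l<M. \<integral>\<omega>. (cmod (Z l \<omega>))\<^sup>2 \<partial>\<Omega>)"
    by (simp add: sum.delta)
  finally have "(\<integral>\<omega>. (cmod (\<Sum>l<M. Z l \<omega>))\<^sup>2 \<partial>\<Omega>) = (\<Sum>l<M. \<integral>\<omega>. (cmod (Z l \<omega>))\<^sup>2 \<partial>\<Omega>)"
    using of_real_eq_iff by blast
  also have "\<dots> \<le> (\<Sum>l<M. V)" by (intro sum_mono) (use Z2 in auto)
  finally show "(\<integral>\<omega>. (cmod (\<Sum>l<M. Z l \<omega>))\<^sup>2 \<partial>\<Omega>) \<le> real M * V" by simp
qed

lemma estimator:
  fixes PP :: "'a measure" and Q :: "'a \<Rightarrow> complex measure" and X :: "'a \<Rightarrow> complex"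
    and \<Omega> :: "'w measure" and T :: "nat \<Rightarrow> 'w \<Rightarrow> 'a" and Y :: "nat \<Rightarrow> 'w \<Rightarrow> complex"
  assumes PP: "prob_space PP" and Om: "prob_space \<Omega>" and Qm: "Q \<in> measurable PP (subprob_algebra borel)"
    and AEA: "AE t in PP. t \<in> A"
    and Qt: "\<And>t. t \<in> A \<Longrightarrow> prob_space (Q t) \<and> has_bochner_integral (Q t) (\<lambda>z. z) (X t) \<and>
        (\<integral>\<^sup>+z. ennreal ((cmod (z - X t))\<^sup>2) \<partial>Q t) \<le> ennreal (\<sigma>\<^sup>2)"
    and Xm: "X \<in> borel_measurable PP"
    and XB: "\<And>t. t \<in> A \<Longrightarrow> cmod (X t) \<le> B"
    and ind: "prob_space.indep_vars \<Omega> (\<lambda>_. PP \<Otimes>\<^sub>M borel) (\<lambda>l \<omega>. (T l \<omega>, Y l \<omega>)) {..<M}"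
    and dist: "\<forall>l<M. distr \<Omega> (PP \<Otimes>\<^sub>M borel) (\<lambda>\<omega>. (T l \<omega>, Y l \<omega>)) =
              PP \<bind> (\<lambda>t. distr (Q t) (PP \<Otimes>\<^sub>M borel) (\<lambda>z. (t, z)))"
    and Mpos: "0 < M"
  shows "sample_mean M Y \<in> borel_measurable \<Omega>"
    and "integrable \<Omega> (\<lambda>\<omega>. (cmod (sample_mean M Y \<omega> - (\<integral>t. X t \<partial>PP)))\<^sup>2)"
    and "(\<integral>\<omega>. (cmod (sample_mean M Y \<omega> - (\<integral>t. X t \<partial>PP)))\<^sup>2 \<partial>\<Omega>) \<le> (\<sigma>\<^sup>2 + B\<^sup>2) / real M"
proof -
  interpret Om: prob_space \<Omega> by (rule Om)
  interpret PP: prob_space PP by (rule PP)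
  define m where "m = (\<integral>t. X t \<partial>PP)"
  have TYm: "(\<lambda>\<omega>. (T l \<omega>, Y l \<omega>)) \<in> measurable \<Omega> (PP \<Otimes>\<^sub>M borel)" if "l < M" for l
    using ind that unfolding Om.indep_vars_def by auto
  have Ym: "Y l \<in> borel_measurable \<Omega>" if "l < M" for l
    using measurable_compose[OF TYm[OF that] measurable_snd] by simp
  have distY: "distr \<Omega> borel (Y l) = PP \<bind> Q" if l: "l < M" for l
  proof -
    have "distr \<Omega> borel (Y l) = distr \<Omega> borel (snd \<circ> (\<lambda>\<omega>. (T l \<omega>, Y l \<omega>)))" by (simp add: comp_def)
    also have "\<dots> = distr (distr \<Omega> (PP \<Otimes>\<^sub>M borel) (\<lambda>\<omega>. (T l \<omega>, Y l \<omega>))) borel snd"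
      by (rule distr_distr[OF measurable_snd TYm[OF l], symmetric])
    also have "\<dots> = PP \<bind> Q"
      unfolding dist[rule_format, OF l] by (rule distr_snd_bind[OF Qm PP.not_empty])
    finally show ?thesis .
  qed
  have nup: "prob_space (PP \<bind> Q)"
    unfolding distY[OF Mpos, symmetric] by (rule Om.prob_space_distr[OF Ym[OF Mpos]])
  have NM: "integrable (PP \<bind> Q) (\<lambda>z. z)"
    "(\<integral>z. z \<partial>(PP \<bind> Q)) = m"
    "integrable (PP \<bind> Q) (\<lambda>z. (cmod (z - m))\<^sup>2)"
    "(\<integral>z. (cmod (z - m))\<^sup>2 \<partial>(PP \<bind> Q)) \<le> \<sigma>\<^sup>2 + B\<^sup>2"
    unfolding m_def by (rule nu_moments[where A=A, OF PP Qm AEA _ Xm _ nup]; use Qt XB in blast)+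
  have Yint: "integrable \<Omega> (Y l)" and Yexp: "(\<integral>\<omega>. Y l \<omega> \<partial>\<Omega>) = m" if l: "l < M" for l
  proof -
    have idm: "(\<lambda>z::complex. z) \<in> borel_measurable borel" by simp
    show "integrable \<Omega> (Y l)"
      using NM(1) unfolding distY[OF l, symmetric] integrable_distr_eq[OF Ym[OF l] idm] .
    show "(\<integral>\<omega>. Y l \<omega> \<partial>\<Omega>) = m"
      using NM(2) unfolding distY[OF l, symmetric] integral_distr[OF Ym[OF l] idm] .
  qed
  have Z2: "integrable \<Omega> (\<lambda>\<omega>. (cmod (Y l \<omega> - m))\<^sup>2) \<and> (\<integral>\<omega>. (cmod (Y l \<omega> - m))\<^sup>2 \<partial>\<Omega>) \<le> \<sigma>\<^sup>2 + B\<^sup>2"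
    if l: "l < M" for l
  proof
    have fm: "(\<lambda>z. (cmod (z - m))\<^sup>2) \<in> borel_measurable borel" by measurable
    show "integrable \<Omega> (\<lambda>\<omega>. (cmod (Y l \<omega> - m))\<^sup>2)"
      using NM(3) unfolding distY[OF l, symmetric] integrable_distr_eq[OF Ym[OF l] fm] .
    show "(\<integral>\<omega>. (cmod (Y l \<omega> - m))\<^sup>2 \<partial>\<Omega>) \<le> \<sigma>\<^sup>2 + B\<^sup>2"
      using NM(4) unfolding distY[OF l, symmetric] integral_distr[OF Ym[OF l] fm] .
  qed
  have indY: "Om.indep_vars (\<lambda>_. borel) Y {..<M}"
    using Om.indep_vars_compose2[where Y="\<lambda>_. snd" and N="\<lambda>_. borel", OF ind] by simp
  have Zc: "integrable \<Omega> (\<lambda>\<omega>. (Y l \<omega> - m) * cnj (Y k \<omega> - m)) \<and> (\<integral>\<omega>. (Y l \<omega> - m) * cnj (Y k \<omega> - m) \<partial>\<Omega>) = 0"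
    if "l < M" "k < M" "l \<noteq> k" for l k
  proof -
    have a: "l \<in> {..<M}" "k \<in> {..<M}" using that by auto
    show ?thesis
      using indep_cross[OF Om indY a(1) a(2) that(3) Yint[OF that(1)] Yint[OF that(2)] Yexp[OF that(1)]] by simp
  qed
  note SV = sum_var[of M \<Omega> "\<lambda>l \<omega>. Y l \<omega> - m", OF Zc Z2]
  have Mne: "real M \<noteq> 0" using Mpos by simp
  have smeq: "sample_mean M Y \<omega> - m = (\<Sum>l<M. Y l \<omega> - m) / of_nat M" for \<omega>
    unfolding sample_mean_def sum_subtractf using Mne by (simp add: field_simps)
  have sq: "(cmod (sample_mean M Y \<omega> - m))\<^sup>2 = (cmod (\<Sum>l<M. Y l \<omega> - m))\<^sup>2 / (real M)\<^sup>2" for \<omega>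
    unfolding smeq by (simp add: norm_divide power_divide)
  show "sample_mean M Y \<in> borel_measurable \<Omega>"
    unfolding sample_mean_def[abs_def]
    by (intro borel_measurable_divide borel_measurable_sum borel_measurable_const) (auto intro: Ym)
  show "integrable \<Omega> (\<lambda>\<omega>. (cmod (sample_mean M Y \<omega> - (\<integral>t. X t \<partial>PP)))\<^sup>2)"
    unfolding m_def[symmetric] sq using SV(1) by simp
  have "(\<integral>\<omega>. (cmod (sample_mean M Y \<omega> - m))\<^sup>2 \<partial>\<Omega>) = (\<integral>\<omega>. (cmod (\<Sum>l<M. Y l \<omega> - m))\<^sup>2 \<partial>\<Omega>) / (real M)\<^sup>2"
    unfolding sq by simp
  also have "\<dots> \<le> (real M * (\<sigma>\<^sup>2 + B\<^sup>2)) / (real M)\<^sup>2"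
    by (intro divide_right_mono SV(2) zero_le_power2)
  also have "\<dots> = (\<sigma>\<^sup>2 + B\<^sup>2) / real M" using Mne by (simp add: power2_eq_square)
  finally show "(\<integral>\<omega>. (cmod (sample_mean M Y \<omega> - (\<integral>t. X t \<partial>PP)))\<^sup>2 \<partial>\<Omega>) \<le> (\<sigma>\<^sup>2 + B\<^sup>2) / real M"
    unfolding m_def .
qed

lemma tail_bound:
  fixes D :: "'w \<Rightarrow> complex"
  assumes Om: "prob_space \<Omega>" and Dm: "D \<in> borel_measurable \<Omega>"
    and I: "integrable \<Omega> (\<lambda>\<omega>. (cmod (D \<omega>))\<^sup>2)"
    and bd: "(\<integral>\<omega>. (cmod (D \<omega>))\<^sup>2 \<partial>\<Omega>) \<le> \<kappa> * a\<^sup>2" and k: "\<kappa> > 0" and a: "a \<ge> 0"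
  shows "measure \<Omega> {\<omega> \<in> space \<Omega>. a < cmod (D \<omega>)} \<le> \<kappa>"
proof -
  interpret prob_space \<Omega> by (rule Om)
  show ?thesis
  proof (cases "a = 0")
    case True
    have "0 \<le> (\<integral>\<omega>. (cmod (D \<omega>))\<^sup>2 \<partial>\<Omega>)" by (rule Bochner_Integration.integral_nonneg) simp
    moreover have "(\<integral>\<omega>. (cmod (D \<omega>))\<^sup>2 \<partial>\<Omega>) \<le> 0"
      using bd True by simp
    ultimately have "(\<integral>\<omega>. (cmod (D \<omega>))\<^sup>2 \<partial>\<Omega>) = 0" by linarith
    then have "AE \<omega> in \<Omega>. (cmod (D \<omega>))\<^sup>2 = 0"
      using integral_nonneg_eq_0_iff_AE[OF I] by simp
    then have "AE \<omega> in \<Omega>. \<not> (a < cmod (D \<omega>))" using True by (auto elim: AE_mp)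
    then have "measure \<Omega> {\<omega> \<in> space \<Omega>. a < cmod (D \<omega>)} = 0" by (rule prob_eq_0_AE)
    then show ?thesis using k by simp
  next
    case False
    then have a2: "a\<^sup>2 > 0" using a by simp
    have sub: "{\<omega> \<in> space \<Omega>. a < cmod (D \<omega>)} \<subseteq> {\<omega> \<in> space \<Omega>. a\<^sup>2 \<le> (cmod (D \<omega>))\<^sup>2}"
      using a by (auto intro: power_mono)
    have ms: "{\<omega> \<in> space \<Omega>. a\<^sup>2 \<le> (cmod (D \<omega>))\<^sup>2} \<in> sets \<Omega>" using Dm by measurable
    have "measure \<Omega> {\<omega> \<in> space \<Omega>. a < cmod (D \<omega>)} \<le> measure \<Omega> {\<omega> \<in> space \<Omega>. a\<^sup>2 \<le> (cmod (D \<omega>))\<^sup>2}"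
      by (rule finite_measure_mono[OF sub ms])
    also have "\<dots> \<le> (\<integral>\<omega>. (cmod (D \<omega>))\<^sup>2 \<partial>\<Omega>) / a\<^sup>2"
      by (rule integral_Markov_inequality_measure[OF I sets.top]) (use a2 in auto)
    also have "\<dots> \<le> \<kappa> * a\<^sup>2 / a\<^sup>2" by (rule divide_right_mono[OF bd]) simp
    also have "\<dots> = \<kappa>" using a2 by simp
    finally show ?thesis .
  qed
qed

lemma ratio_det:
  fixes a b w :: complex and I x y B \<epsilon> :: real
  assumes I: "I > 0" and B: "B \<ge> 0" and e: "\<epsilon> > 0" and w: "cmod w \<le> B * I"
    and ax: "cmod (a - w) \<le> x" and yb: "cmod (b - complex_of_real I) \<le> y"
    and key: "x + (B + \<epsilon>) * y \<le> \<epsilon> * I"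
  shows "cmod (a / b - w / complex_of_real I) \<le> \<epsilon>"
proof -
  have x0: "x \<ge> 0" using ax norm_ge_zero order.trans by blast
  have y0: "y \<ge> 0" using yb norm_ge_zero order.trans by blast
  have bI: "cmod b \<ge> I - y"
  proof -
    have "I - cmod b \<le> cmod (complex_of_real I - b)" using norm_triangle_ineq2[of "complex_of_real I" b] I by simp
    moreover have "cmod (complex_of_real I - b) = cmod (b - complex_of_real I)" by (rule norm_minus_commute)
    ultimately show ?thesis using yb by linarith
  qed
  show ?thesis
  proof (cases "b = 0")
    case True
    then have yI: "y \<ge> I" using yb I by simp
    have "x + B * y + \<epsilon> * y \<le> \<epsilon> * y" using key yI e
      by (smt (verit, ccfv_SIG) distrib_right mult_left_mono)
    then have "x + B * y \<le> 0" by simp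
    moreover have "B * y \<ge> 0" using B y0 by simp
    ultimately have "x = 0" "B * y = 0" using x0 by linarith+
    then have "B = 0" using yI I by auto
    then have "w = 0" using w by simp
    then have "a = 0" using ax \<open>x = 0\<close> by simp
    then show ?thesis using \<open>w = 0\<close> True e by simp
  next
    case False
    have Ine: "complex_of_real I \<noteq> 0" using I by simp
    have eq: "a / b - w / complex_of_real I = (a - w - (w / complex_of_real I) * (b - complex_of_real I)) / b"
      using False Ine by (simp add: field_simps)
    have oI: "cmod (w / complex_of_real I) \<le> B" using w I by (simp add: norm_divide divide_le_eq)
    have "cmod (a - w - (w / complex_of_real I) * (b - complex_of_real I)) \<le> cmod (a - w) + cmod (w / complex_of_real I) * cmod (b - complex_of_real I)"
      using norm_triangle_ineq4[of "a - w" "(w / complex_of_real I) * (b - complex_of_real I)"] by (simp add: norm_mult norm_divide)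
    also have "\<dots> \<le> x + B * y"
      by (intro add_mono ax mult_mono oI yb B) simp_all
    also have "\<dots> \<le> \<epsilon> * (I - y)" using key by (simp add: algebra_simps)
    also have "\<dots> \<le> \<epsilon> * cmod b" using bI e by simp
    finally have num: "cmod (a - w - (w / complex_of_real I) * (b - complex_of_real I)) \<le> \<epsilon> * cmod b" .
    have bpos: "cmod b > 0" using False by simp
    show ?thesis unfolding eq norm_divide using num bpos by (simp add: divide_le_eq)
  qed
qed

theorem theorem1:
  fixes n :: nat
    and \<Theta> :: "(real^'k::finite) set"
    and U :: "real^'k \<Rightarrow> nat \<Rightarrow> nat \<Rightarrow> complex"
    and \<alpha> :: "'p \<Rightarrow> real^'k \<Rightarrow> complex"
    and lam :: 'p
    and Op :: "nat \<Rightarrow> nat \<Rightarrow> complex"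
    and \<Omega> :: "'w measure"
    and M :: nat
    and QO QI :: "(real^'k) \<times> (real^'k) \<Rightarrow> complex measure"
    and TO TI :: "nat \<Rightarrow> 'w \<Rightarrow> (real^'k) \<times> (real^'k)"
    and YO YI :: "nat \<Rightarrow> 'w \<Rightarrow> complex"
    and \<sigma>O \<sigma>I \<epsilon> \<kappa> :: real
  assumes Theta_meas: "\<Theta> \<in> sets lborel"
    and U_meas: "\<And>i j. (\<lambda>\<theta>. U \<theta> i j) \<in> borel_measurable lborel"
    and U_unitary: "\<And>\<theta>. \<theta> \<in> \<Theta> \<Longrightarrow> unitary_mat (qdim n) (U \<theta>)"
    and alpha_meas: "\<alpha> lam \<in> borel_measurable lborel"
    and C_finite: "set_integrable lborel \<Theta> (\<lambda>\<theta>. cmod (\<alpha> lam \<theta>))"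
    and C_pos: "Cnorm \<Theta> \<alpha> lam > 0"
    and procO: "meas_procedure (Pmeas \<Theta> \<alpha> lam \<Otimes>\<^sub>M Pmeas \<Theta> \<alpha> lam) \<Theta>
                  (Xval n \<alpha> U lam Op) \<sigma>O QO"
    and procI: "meas_procedure (Pmeas \<Theta> \<alpha> lam \<Otimes>\<^sub>M Pmeas \<Theta> \<alpha> lam) \<Theta>
                  (Xval n \<alpha> U lam id_op) \<sigma>I QI"
    and Omega: "prob_space \<Omega>"
    and sampO: "sampling_scheme \<Omega> M (Pmeas \<Theta> \<alpha> lam \<Otimes>\<^sub>M Pmeas \<Theta> \<alpha> lam) QO TO YO"
    and sampI: "sampling_scheme \<Omega> M (Pmeas \<Theta> \<alpha> lam \<Otimes>\<^sub>M Pmeas \<Theta> \<alpha> lam) QI TI YI"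
    and norm_pos: "Re (expval n \<Theta> \<alpha> U lam id_op) > 0"
    and eps_pos: "\<epsilon> > 0"
    and kappa_pos: "\<kappa> > 0"
    and M_bound: "real M \<ge>
       (sqrt ((spec_norm (qdim n) Op)\<^sup>2 + \<sigma>O\<^sup>2) + sqrt (1 + \<sigma>I\<^sup>2) * spec_norm (qdim n) Op
          + \<epsilon> * sqrt (1 + \<sigma>I\<^sup>2))\<^sup>2
       / (\<kappa> * \<epsilon>\<^sup>2 * (Re (expval n \<Theta> \<alpha> U lam id_op))\<^sup>2)"
  shows "measure \<Omega> {\<omega> \<in> space \<Omega>.
            cmod (sample_mean M YO \<omega> / sample_mean M YI \<omega>
                  - expval n \<Theta> \<alpha> U lam Op / expval n \<Theta> \<alpha> U lam id_op) \<le> \<epsilon>}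
         \<ge> 1 - 2 * \<kappa>"
proof -
  let ?P = "Pmeas \<Theta> \<alpha> lam"
  let ?PP = "?P \<Otimes>\<^sub>M ?P"
  let ?d = "qdim n"
  let ?BO = "spec_norm ?d Op"
  note base = Theta_meas alpha_meas C_finite C_pos
  note base2 = base U_meas U_unitary
  interpret Om: prob_space \<Omega> by (rule Omega)
  have PPp: "prob_space ?PP" by (rule PP_prob[OF base])
  have AEPP: "AE t in ?PP. t \<in> \<Theta> \<times> \<Theta>" by (rule AE_PP[OF base])
  define I where "I = Re (expval n \<Theta> \<alpha> U lam id_op)"
  have Ipos: "I > 0" using norm_pos unfolding I_def .
  have Ieq: "expval n \<Theta> \<alpha> U lam id_op = complex_of_real I"
    unfolding I_def expval_id by simp
  have BO0: "?BO \<ge> 0" by (rule spec_norm_nonneg[OF qdim_pos])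
  define chi where "chi = sqrt (?BO\<^sup>2 + \<sigma>O\<^sup>2) + sqrt (1 + \<sigma>I\<^sup>2) * ?BO + \<epsilon> * sqrt (1 + \<sigma>I\<^sup>2)"
  have s1: "sqrt (1 + \<sigma>I\<^sup>2) > 0" by (simp add: add_pos_nonneg)
  have chipos: "chi > 0" unfolding chi_def using s1 BO0 eps_pos
    by (intro add_nonneg_pos add_nonneg_nonneg mult_nonneg_nonneg mult_pos_pos) auto
  have den: "\<kappa> * \<epsilon>\<^sup>2 * I\<^sup>2 > 0" using kappa_pos eps_pos Ipos by simp
  have Mb: "real M \<ge> chi\<^sup>2 / (\<kappa> * \<epsilon>\<^sup>2 * I\<^sup>2)" using M_bound unfolding chi_def I_def .
  have Mpos: "0 < M"
  proof -
    have "chi\<^sup>2 / (\<kappa> * \<epsilon>\<^sup>2 * I\<^sup>2) > 0" using chipos den by simp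
    then show ?thesis using Mb by linarith
  qed
  have Mk: "real M * \<kappa> > 0" using Mpos kappa_pos by simp
  have key0: "chi\<^sup>2 \<le> real M * \<kappa> * (\<epsilon> * I)\<^sup>2"
    using Mb den by (simp add: divide_le_eq power_mult_distrib mult_ac)
  have key1: "chi \<le> sqrt (real M * \<kappa>) * (\<epsilon> * I)"
  proof -
    have "chi = sqrt (chi\<^sup>2)" using chipos by simp
    also have "\<dots> \<le> sqrt (real M * \<kappa> * (\<epsilon> * I)\<^sup>2)" using key0 by (rule real_sqrt_le_mono)
    also have "\<dots> = sqrt (real M * \<kappa>) * (\<epsilon> * I)" using eps_pos Ipos by (simp add: real_sqrt_mult)
    finally show ?thesis .
  qed
  define sq where "sq = sqrt (real M * \<kappa>)"
  have sqpos: "sq > 0" unfolding sq_def using Mk by simp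
  define aO where "aO = sqrt (?BO\<^sup>2 + \<sigma>O\<^sup>2) / sq"
  define aI where "aI = sqrt (1 + \<sigma>I\<^sup>2) / sq"
  have aO0: "aO \<ge> 0" unfolding aO_def using sqpos by simp
  have aI0: "aI \<ge> 0" unfolding aI_def using sqpos by simp
  have key: "aO + (?BO + \<epsilon>) * aI \<le> \<epsilon> * I"
  proof -
    have "aO + (?BO + \<epsilon>) * aI = chi / sq" unfolding aO_def aI_def chi_def using sqpos
      by (simp add: field_simps)
    also have "\<dots> \<le> \<epsilon> * I" using key1 sqpos unfolding sq_def[symmetric] by (simp add: divide_le_eq mult_ac)
    finally show ?thesis .
  qed
  have aO2: "(\<sigma>O\<^sup>2 + ?BO\<^sup>2) / real M = \<kappa> * aO\<^sup>2"
    unfolding aO_def sq_def using Mk kappa_pos Mpos by (simp add: power_divide field_simps)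
  have aI2: "(\<sigma>I\<^sup>2 + 1\<^sup>2) / real M = \<kappa> * aI\<^sup>2"
    unfolding aI_def sq_def using Mk kappa_pos Mpos by (simp add: power_divide field_simps)
  from procO have QOm: "QO \<in> measurable ?PP (subprob_algebra borel)"
    and QOt: "\<And>t. t \<in> \<Theta> \<times> \<Theta> \<Longrightarrow> prob_space (QO t) \<and> has_bochner_integral (QO t) (\<lambda>z. z) (Xval n \<alpha> U lam Op t) \<and>
        (\<integral>\<^sup>+z. ennreal ((cmod (z - Xval n \<alpha> U lam Op t))\<^sup>2) \<partial>QO t) \<le> ennreal (\<sigma>O\<^sup>2)"
    unfolding meas_procedure_def by auto
  from procI have QIm: "QI \<in> measurable ?PP (subprob_algebra borel)"
    and QIt: "\<And>t. t \<in> \<Theta> \<times> \<Theta> \<Longrightarrow> prob_space (QI t) \<and> has_bochner_integral (QI t) (\<lambda>z. z) (Xval n \<alpha> U lam id_op t) \<and>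
        (\<integral>\<^sup>+z. ennreal ((cmod (z - Xval n \<alpha> U lam id_op t))\<^sup>2) \<partial>QI t) \<le> ennreal (\<sigma>I\<^sup>2)"
    unfolding meas_procedure_def by auto
  from sampO have indO: "prob_space.indep_vars \<Omega> (\<lambda>_. ?PP \<Otimes>\<^sub>M borel) (\<lambda>l \<omega>. (TO l \<omega>, YO l \<omega>)) {..<M}"
    and distO: "\<forall>l<M. distr \<Omega> (?PP \<Otimes>\<^sub>M borel) (\<lambda>\<omega>. (TO l \<omega>, YO l \<omega>)) =
              ?PP \<bind> (\<lambda>t. distr (QO t) (?PP \<Otimes>\<^sub>M borel) (\<lambda>z. (t, z)))"
    unfolding sampling_scheme_def by auto
  from sampI have indI: "prob_space.indep_vars \<Omega> (\<lambda>_. ?PP \<Otimes>\<^sub>M borel) (\<lambda>l \<omega>. (TI l \<omega>, YI l \<omega>)) {..<M}"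
    and distI: "\<forall>l<M. distr \<Omega> (?PP \<Otimes>\<^sub>M borel) (\<lambda>\<omega>. (TI l \<omega>, YI l \<omega>)) =
              ?PP \<bind> (\<lambda>t. distr (QI t) (?PP \<Otimes>\<^sub>M borel) (\<lambda>z. (t, z)))"
    unfolding sampling_scheme_def by auto
  have XBO: "cmod (Xval n \<alpha> U lam Op t) \<le> ?BO" if "t \<in> \<Theta> \<times> \<Theta>" for t
    using that by (intro Xval_bound U_unitary) auto
  have XBI: "cmod (Xval n \<alpha> U lam id_op t) \<le> 1" if "t \<in> \<Theta> \<times> \<Theta>" for t
    using that by (intro Xval_id_bound U_unitary) auto
  have XmO: "Xval n \<alpha> U lam Op \<in> borel_measurable ?PP" using Xval_meas[OF base2] by blast
  have XmI: "Xval n \<alpha> U lam id_op \<in> borel_measurable ?PP" using Xval_meas[OF base2] by blast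
  have mO: "(\<integral>t. Xval n \<alpha> U lam Op t \<partial>?PP) = expval n \<Theta> \<alpha> U lam Op" using mean_eq[OF base2] by blast
  have mI: "(\<integral>t. Xval n \<alpha> U lam id_op t \<partial>?PP) = expval n \<Theta> \<alpha> U lam id_op" using mean_eq[OF base2] by blast
  have EO: "sample_mean M YO \<in> borel_measurable \<Omega>"
    "integrable \<Omega> (\<lambda>\<omega>. (cmod (sample_mean M YO \<omega> - expval n \<Theta> \<alpha> U lam Op))\<^sup>2)"
    "(\<integral>\<omega>. (cmod (sample_mean M YO \<omega> - expval n \<Theta> \<alpha> U lam Op))\<^sup>2 \<partial>\<Omega>) \<le> (\<sigma>O\<^sup>2 + ?BO\<^sup>2) / real M"
    unfolding mO[symmetric]
    by (rule estimator[where A="\<Theta> \<times> \<Theta>", OF PPp Omega QOm AEPP _ XmO _ indO distO Mpos]; use QOt XBO in blast)+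
  have EI: "sample_mean M YI \<in> borel_measurable \<Omega>"
    "integrable \<Omega> (\<lambda>\<omega>. (cmod (sample_mean M YI \<omega> - expval n \<Theta> \<alpha> U lam id_op))\<^sup>2)"
    "(\<integral>\<omega>. (cmod (sample_mean M YI \<omega> - expval n \<Theta> \<alpha> U lam id_op))\<^sup>2 \<partial>\<Omega>) \<le> (\<sigma>I\<^sup>2 + 1\<^sup>2) / real M"
    unfolding mI[symmetric]
    by (rule estimator[where A="\<Theta> \<times> \<Theta>", OF PPp Omega QIm AEPP _ XmI _ indI distI Mpos]; use QIt XBI in blast)+
  define DO where "DO \<omega> = sample_mean M YO \<omega> - expval n \<Theta> \<alpha> U lam Op" for \<omega>
  define DI where "DI \<omega> = sample_mean M YI \<omega> - expval n \<Theta> \<alpha> U lam id_op" for \<omega>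
  have smO[measurable]: "sample_mean M YO \<in> borel_measurable \<Omega>" by (rule EO(1))
  have smI[measurable]: "sample_mean M YI \<in> borel_measurable \<Omega>" by (rule EI(1))
  have DOm: "DO \<in> borel_measurable \<Omega>" unfolding DO_def[abs_def] by measurable
  have DIm: "DI \<in> borel_measurable \<Omega>" unfolding DI_def[abs_def] by measurable
  have tO: "measure \<Omega> {\<omega> \<in> space \<Omega>. aO < cmod (DO \<omega>)} \<le> \<kappa>"
  proof (rule tail_bound[OF Omega DOm _ _ kappa_pos aO0])
    show "integrable \<Omega> (\<lambda>\<omega>. (cmod (DO \<omega>))\<^sup>2)" using EO(2) unfolding DO_def .
    show "(\<integral>\<omega>. (cmod (DO \<omega>))\<^sup>2 \<partial>\<Omega>) \<le> \<kappa> * aO\<^sup>2" using EO(3) unfolding DO_def aO2 .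
  qed
  have tI: "measure \<Omega> {\<omega> \<in> space \<Omega>. aI < cmod (DI \<omega>)} \<le> \<kappa>"
  proof (rule tail_bound[OF Omega DIm _ _ kappa_pos aI0])
    show "integrable \<Omega> (\<lambda>\<omega>. (cmod (DI \<omega>))\<^sup>2)" using EI(2) unfolding DI_def .
    show "(\<integral>\<omega>. (cmod (DI \<omega>))\<^sup>2 \<partial>\<Omega>) \<le> \<kappa> * aI\<^sup>2" using EI(3) unfolding DI_def aI2 .
  qed
  define BadO where "BadO = {\<omega> \<in> space \<Omega>. aO < cmod (DO \<omega>)}"
  define BadI where "BadI = {\<omega> \<in> space \<Omega>. aI < cmod (DI \<omega>)}"
  define Good where "Good = {\<omega> \<in> space \<Omega>.
            cmod (sample_mean M YO \<omega> / sample_mean M YI \<omega>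
                  - expval n \<Theta> \<alpha> U lam Op / expval n \<Theta> \<alpha> U lam id_op) \<le> \<epsilon>}"
  have BadO_m: "BadO \<in> sets \<Omega>" unfolding BadO_def using DOm by measurable
  have BadI_m: "BadI \<in> sets \<Omega>" unfolding BadI_def using DIm by measurable
  have Good_m: "Good \<in> sets \<Omega>" unfolding Good_def by measurable
  have sub: "space \<Omega> - (BadO \<union> BadI) \<subseteq> Good"
  proof
    fix \<omega> assume w: "\<omega> \<in> space \<Omega> - (BadO \<union> BadI)"
    then have a1: "cmod (sample_mean M YO \<omega> - expval n \<Theta> \<alpha> U lam Op) \<le> aO"
      and a2: "cmod (sample_mean M YI \<omega> - complex_of_real I) \<le> aI"
      unfolding BadO_def BadI_def DO_def DI_def Ieq by auto
    have ob: "cmod (expval n \<Theta> \<alpha> U lam Op) \<le> ?BO * I"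
      using expval_bound[of n \<Theta> \<alpha> U lam Op] unfolding I_def .
    have "cmod (sample_mean M YO \<omega> / sample_mean M YI \<omega> - expval n \<Theta> \<alpha> U lam Op / complex_of_real I) \<le> \<epsilon>"
      by (rule ratio_det[OF Ipos BO0 eps_pos ob a1 a2 key])
    then show "\<omega> \<in> Good" using w unfolding Good_def Ieq by auto
  qed
  have "1 - 2 * \<kappa> \<le> 1 - (measure \<Omega> BadO + measure \<Omega> BadI)"
    using tO tI unfolding BadO_def BadI_def by linarith
  also have "\<dots> \<le> 1 - measure \<Omega> (BadO \<union> BadI)"
    using measure_Un_le[OF BadO_m BadI_m] by linarith
  also have "\<dots> = measure \<Omega> (space \<Omega> - (BadO \<union> BadI))"
    using Om.prob_compl[of "BadO \<union> BadI"] BadO_m BadI_m by auto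
  also have "\<dots> \<le> measure \<Omega> Good"
    by (rule Om.finite_measure_mono[OF sub Good_m])
  finally show ?thesis unfolding Good_def .
qed

end
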